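(* The element $(\mathcal{X}^2)^4\in\Lambda$ is a nonzero element of maximal rank, i.e. $(\mathcal{X}^2)^4=c\,\prod_{a,A}\psi^a_A\prod_{a,A}\overline{\psi^a_A}$ (product of all 24 generators in a fixed order) with $c\neq0$.
   Context: Colour indices $A,B,\dots\in\{1,2,3\}$; bispinor indices $a,b,\dots\in\{1,2,\dot1,\dot2\}$; summation over repeated indices; spacetime indices raised/lowered with $\eta=\mathrm{diag}(1,-1,-1,-1)$. $\Lambda$ is the complex Grassmann algebra generated by the 24 anticommuting generators $\psi^a_A,\overline{\psi^a_A}$. $g^{AB}=\delta^{AB}$. Spinor structures: $\sigma^\mu=(I,\sigma^1,\sigma^2,\sigma^3)$, $\tilde\sigma^\mu=(I,-\sigma^k)$; in the ordering $(1,2,\dot1,\dot2)$, $(\gamma^\mu)^a{}_b=\begin{pmatrix}0&\tilde\sigma^\mu\\ \sigma^\mu&0\end{pmatrix}$, $\epsilon_{ab}=\begin{pmatrix}\varepsilon&0\\0&-\varepsilon\end{pmatrix}$ with $\varepsilon=\begin{pmatrix}0&1\\-1&0\end{pmatrix}$, $(\gamma^\mu)_{cb}:=(\gamma^\mu)^a{}_b\epsilon_{ac}$, $\beta_{ab}=\begin{pmatrix}0&I_2\\ I_2&0\end{pmatrix}$, and $\beta_{abcd}:=\tfrac12\overline{(\gamma_\mu)_{ab}}(\gamma^\mu)_{cd}$. Define $\mathcal{J}^{ab}:=\overline{\psi^a_A}g^{AB}\psi^b_B$ and $\mathcal{X}^2:=4\beta_{bcef}\beta_{ad}\{\mathcal{J}^{ad}\mathcal{J}^{be}\mathcal{J}^{cf}+2\mathcal{J}^{ae}\mathcal{J}^{bf}\mathcal{J}^{cd}\}$.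 *)

theory Defs
  imports Complex_Main
begin

text \<open>Generators are indexed by natural numbers 0..23:
  psi^a_A   (a bispinor index 0..3 for 1,2,dot1,dot2; A colour index 0..2 for 1,2,3)  -> 3*a + A,
  bar psi^a_A -> 12 + 3*a + A.
  An element of the algebra is given by its coefficients on the monomials
  e_S = e_{i1} ... e_{ik} (i1 < ... < ik), S = {i1,...,ik}.\<close>

type_synonym grass = "nat set \<Rightarrow> complex"

definition gsign :: "nat set \<Rightarrow> nat set \<Rightarrow> complex" where
  "gsign A B = (-1) ^ card {(a, b). a \<in> A \<and> b \<in> B \<and> b < a}"

text \<open>Product: e_A e_B = gsign A B * e_(A \<union> B) for disjoint A, B, and 0 otherwise.\<close>
definition gmul :: "grass \<Rightarrow> grass \<Rightarrow> grass" where
  "gmul x y = (\<lambda>S. \<Sum>A\<in>Pow S. gsign A (S - A) * x A * y (S - A))"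

definition gadd :: "grass \<Rightarrow> grass \<Rightarrow> grass" where
  "gadd x y = (\<lambda>S. x S + y S)"

definition gsmul :: "complex \<Rightarrow> grass \<Rightarrow> grass" where
  "gsmul c x = (\<lambda>S. c * x S)"

definition gsum :: "('i \<Rightarrow> grass) \<Rightarrow> 'i set \<Rightarrow> grass" where
  "gsum f I = (\<lambda>S. \<Sum>i\<in>I. f i S)"

definition gone :: grass where
  "gone = (\<lambda>S. if S = {} then 1 else 0)"

definition gpow :: "grass \<Rightarrow> nat \<Rightarrow> grass" where
  "gpow x n = (gmul x ^^ n) gone"

definition gen :: "nat \<Rightarrow> grass" where
  "gen i = (\<lambda>S. if S = {i} then 1 else 0)"

definition psi :: "nat \<Rightarrow> nat \<Rightarrow> grass" where
  "psi a A = gen (3 * a + A)"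

definition psibar :: "nat \<Rightarrow> nat \<Rightarrow> grass" where
  "psibar a A = gen (12 + 3 * a + A)"

text \<open>Product of all 24 generators in the fixed order
  psi^1_1 psi^1_2 ... psi^{dot2}_3 bar psi^1_1 ... bar psi^{dot2}_3.\<close>
definition gtop :: grass where
  "gtop = foldl gmul gone (map gen [0..<24])"

definition sigma :: "nat \<Rightarrow> nat \<Rightarrow> nat \<Rightarrow> complex" where
  "sigma \<mu> i j =
     (if \<mu> = 0 then (if i = j then 1 else 0)
      else if \<mu> = 1 then (if i \<noteq> j then 1 else 0)
      else if \<mu> = 2 then (if i = 0 \<and> j = 1 then - \<i> else if i = 1 \<and> j = 0 then \<i> else 0)
      else (if i = 0 \<and> j = 0 then 1 else if i = 1 \<and> j = 1 then -1 else 0))"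

definition sigmat :: "nat \<Rightarrow> nat \<Rightarrow> nat \<Rightarrow> complex" where
  "sigmat \<mu> i j = (if \<mu> = 0 then sigma 0 i j else - sigma \<mu> i j)"

text \<open>(gamma^mu)^a_b, bispinor indices 0,1,2,3 = 1,2,dot1,dot2.\<close>
definition gamma_up :: "nat \<Rightarrow> nat \<Rightarrow> nat \<Rightarrow> complex" where
  "gamma_up \<mu> a b =
     (if a < 2 \<and> 2 \<le> b \<and> b < 4 then sigmat \<mu> a (b - 2)
      else if 2 \<le> a \<and> a < 4 \<and> b < 2 then sigma \<mu> (a - 2) b else 0)"

definition eps2 :: "nat \<Rightarrow> nat \<Rightarrow> complex" where
  "eps2 i j = (if i = 0 \<and> j = 1 then 1 else if i = 1 \<and> j = 0 then -1 else 0)"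

definition epsilon :: "nat \<Rightarrow> nat \<Rightarrow> complex" where
  "epsilon a b =
     (if a < 2 \<and> b < 2 then eps2 a b
      else if 2 \<le> a \<and> a < 4 \<and> 2 \<le> b \<and> b < 4 then - eps2 (a - 2) (b - 2) else 0)"

definition gamma_low :: "nat \<Rightarrow> nat \<Rightarrow> nat \<Rightarrow> complex" where
  "gamma_low \<mu> c b = (\<Sum>a<4. gamma_up \<mu> a b * epsilon a c)"

definition eta :: "nat \<Rightarrow> complex" where
  "eta \<mu> = (if \<mu> = 0 then 1 else -1)"

text \<open>beta_{abcd} = 1/2 conj((gamma_mu)_{ab}) (gamma^mu)_{cd}, with gamma_mu = eta_{mu mu} gamma^mu.\<close>
definition beta4 :: "nat \<Rightarrow> nat \<Rightarrow> nat \<Rightarrow> nat \<Rightarrow> complex" where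
  "beta4 a b c d = 1/2 * (\<Sum>\<mu><4. cnj (eta \<mu> * gamma_low \<mu> a b) * gamma_low \<mu> c d)"

definition beta2 :: "nat \<Rightarrow> nat \<Rightarrow> complex" where
  "beta2 a b = (if (a < 2 \<and> b = a + 2) \<or> (b < 2 \<and> a = b + 2) then 1 else 0)"

text \<open>J^{ab} = bar psi^a_A g^{AB} psi^b_B with g^{AB} = delta^{AB}.\<close>
definition Jc :: "nat \<Rightarrow> nat \<Rightarrow> grass" where
  "Jc a b = gsum (\<lambda>A. gmul (psibar a A) (psi b A)) {..<3}"

definition X2 :: grass where
  "X2 = gsmul 4 (gsum (\<lambda>(a, b, c, d, e, f).
          gsmul (beta4 b c e f * beta2 a d)
            (gadd (gmul (gmul (Jc a d) (Jc b e)) (Jc c f))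
                  (gsmul 2 (gmul (gmul (Jc a e) (Jc b f)) (Jc c d)))))
        ({..<4} \<times> {..<4} \<times> {..<4} \<times> {..<4} \<times> {..<4} \<times> {..<4}))"

end

theory Submission
  imports Defs
begin

definition gz :: grass where "gz = (\<lambda>S. 0)"
definition ind :: "nat set \<Rightarrow> grass" where "ind A = (\<lambda>S. if S = A then 1 else 0)"
definition gpar :: "grass \<Rightarrow> grass" where "gpar x = (\<lambda>S. (-1) ^ card S * x S)"
definition fsupp :: "grass \<Rightarrow> bool" where "fsupp x \<longleftrightarrow> (\<forall>S. x S \<noteq> 0 \<longrightarrow> finite S)"
definition evn :: "grass \<Rightarrow> bool" where "evn x \<longleftrightarrow> (\<forall>S. x S \<noteq> 0 \<longrightarrow> finite S \<and> even (card S))"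
definition prs :: "nat set \<Rightarrow> nat set \<Rightarrow> (nat \<times> nat) set" where
  "prs A B = {(a, b). a \<in> A \<and> b \<in> B \<and> b < a}"

lemma gsign_prs: "gsign A B = (-1) ^ card (prs A B)"
  by (simp add: gsign_def prs_def)

lemma finite_prs: "finite A \<Longrightarrow> finite B \<Longrightarrow> finite (prs A B)"
  by (rule finite_subset[of _ "A \<times> B"]) (auto simp: prs_def)

lemma gsign_sq: "gsign A B * gsign A B = 1"
  by (simp add: gsign_prs power_mult_distrib[symmetric])

lemma gone_ind: "gone = ind {}" by (simp add: gone_def ind_def)
lemma gen_ind: "gen i = ind {i}" by (simp add: gen_def ind_def)

lemma gmul_apply: "gmul x y S = (\<Sum>A\<in>Pow S. gsign A (S - A) * x A * y (S - A))"
  by (simp add: gmul_def)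

lemma gmul_infinite: "infinite S \<Longrightarrow> gmul x y S = 0"
  by (simp add: gmul_def)

lemma gmul_nz:
  assumes "gmul x y S \<noteq> 0"
  shows "finite S \<and> (\<exists>A\<subseteq>S. x A \<noteq> 0 \<and> y (S - A) \<noteq> 0)"
proof -
  have fin: "finite S" using assms gmul_infinite by blast
  from assms obtain A where "A \<in> Pow S" "gsign A (S - A) * x A * y (S - A) \<noteq> 0"
    unfolding gmul_apply by (meson sum.not_neutral_contains_not_neutral)
  then show ?thesis using fin by auto
qed

lemma gmul_ind_left:
  "gmul (ind A) y S = (if A \<subseteq> S \<and> finite S then gsign A (S - A) * y (S - A) else 0)"
proof (cases "finite S")
  case True
  have "gmul (ind A) y S = (\<Sum>B\<in>Pow S. if B = A then gsign A (S - A) * y (S - A) else 0)"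
    unfolding gmul_apply by (rule sum.cong) (auto simp: ind_def)
  also have "\<dots> = (if A \<subseteq> S then gsign A (S - A) * y (S - A) else 0)"
    using True by (simp add: sum.delta)
  finally show ?thesis using True by simp
qed (simp add: gmul_infinite)

lemma gmul_ind_right:
  "gmul x (ind B) S = (if B \<subseteq> S \<and> finite S then gsign (S - B) B * x (S - B) else 0)"
proof (cases "finite S")
  case True
  have "gmul x (ind B) S = (\<Sum>A\<in>Pow S. if A = S - B \<and> B \<subseteq> S then gsign (S - B) B * x (S - B) else 0)"
    unfolding gmul_apply
  proof (rule sum.cong)
    fix A assume "A \<in> Pow S"
    then have AS: "A \<subseteq> S" by simp
    have "(S - A = B) \<longleftrightarrow> (A = S - B \<and> B \<subseteq> S)" using AS by auto
    then show "gsign A (S - A) * x A * ind B (S - A) =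
        (if A = S - B \<and> B \<subseteq> S then gsign (S - B) B * x (S - B) else 0)"
      by (auto simp: ind_def Diff_Diff_Int Int_absorb1 AS)
  qed simp
  also have "\<dots> = (if B \<subseteq> S then gsign (S - B) B * x (S - B) else 0)"
    using True by (cases "B \<subseteq> S") (simp_all add: sum.delta)
  finally show ?thesis using True by simp
qed (simp add: gmul_infinite)

lemma gmul_ind_ind:
  assumes "finite A" "finite B"
  shows "gmul (ind A) (ind B) = (if A \<inter> B = {} then gsmul (gsign A B) (ind (A \<union> B)) else gz)"
proof (rule ext)
  fix S
  have g: "gmul (ind A) (ind B) S = (if A \<subseteq> S \<and> finite S then gsign A (S - A) * ind B (S - A) else 0)"
    by (rule gmul_ind_left)
  show "gmul (ind A) (ind B) S = (if A \<inter> B = {} then gsmul (gsign A B) (ind (A \<union> B)) else gz) S"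
  proof (cases "A \<inter> B = {}")
    case True
    show ?thesis
    proof (cases "S = A \<union> B")
      case True2: True
      have "S - A = B" using True True2 by auto
      then show ?thesis unfolding g using True True2 assms by (simp add: ind_def gsmul_def)
    next
      case False
      have "\<not> (A \<subseteq> S \<and> S - A = B)" using False by auto
      then show ?thesis unfolding g using True False by (auto simp: ind_def gsmul_def)
    qed
  next
    case False
    have "\<not> (A \<subseteq> S \<and> S - A = B)" using False by auto
    then show ?thesis unfolding g using False by (auto simp: ind_def gz_def)
  qed
qed

lemma gmul_gadd_left: "gmul (gadd x y) z = gadd (gmul x z) (gmul y z)"
  by (simp add: gmul_def gadd_def fun_eq_iff algebra_simps sum.distrib)
lemma gmul_gadd_right: "gmul x (gadd y z) = gadd (gmul x y) (gmul x z)"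
  by (simp add: gmul_def gadd_def fun_eq_iff algebra_simps sum.distrib)
lemma gmul_gsmul_left: "gmul (gsmul c x) y = gsmul c (gmul x y)"
  by (simp add: gmul_def gsmul_def fun_eq_iff algebra_simps sum_distrib_left)
lemma gmul_gsmul_right: "gmul x (gsmul c y) = gsmul c (gmul x y)"
  by (simp add: gmul_def gsmul_def fun_eq_iff algebra_simps sum_distrib_left)
lemma gmul_gz_left: "gmul gz y = gz"
  by (simp add: gmul_def gz_def fun_eq_iff)
lemma gmul_gz_right: "gmul x gz = gz"
  by (simp add: gmul_def gz_def fun_eq_iff)
lemma gsmul_gsmul: "gsmul c (gsmul d x) = gsmul (c * d) x"
  by (simp add: gsmul_def fun_eq_iff)
lemma gsmul_gadd: "gsmul c (gadd x y) = gadd (gsmul c x) (gsmul c y)"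
  by (simp add: gsmul_def gadd_def fun_eq_iff algebra_simps)
lemma gsmul_gz: "gsmul c gz = gz"
  by (simp add: gsmul_def gz_def fun_eq_iff)
lemma gadd_gz_left: "gadd gz x = x" by (simp add: gadd_def gz_def)
lemma gadd_gz_right: "gadd x gz = x" by (simp add: gadd_def gz_def)
lemma gsmul_one: "gsmul 1 x = x" by (simp add: gsmul_def)

lemma prs_Un_left: "A \<inter> B = {} \<Longrightarrow> prs (A \<union> B) C = prs A C \<union> prs B C \<and> prs A C \<inter> prs B C = {}"
  by (auto simp: prs_def)
lemma prs_Un_right: "B \<inter> C = {} \<Longrightarrow> prs A (B \<union> C) = prs A B \<union> prs A C \<and> prs A B \<inter> prs A C = {}"
  by (auto simp: prs_def)

lemma gsign_Un_left:
  assumes "finite A" "finite B" "finite C" "A \<inter> B = {}"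
  shows "gsign (A \<union> B) C = gsign A C * gsign B C"
  using prs_Un_left[OF assms(4), of C] finite_prs[OF assms(1,3)] finite_prs[OF assms(2,3)]
  by (simp add: gsign_prs card_Un_disjoint power_add)

lemma gsign_Un_right:
  assumes "finite A" "finite B" "finite C" "B \<inter> C = {}"
  shows "gsign A (B \<union> C) = gsign A B * gsign A C"
  using prs_Un_right[OF assms(4), of A] finite_prs[OF assms(1,2)] finite_prs[OF assms(1,3)]
  by (simp add: gsign_prs card_Un_disjoint power_add)

lemma gsign_empty_left: "gsign {} B = 1" by (simp add: gsign_prs prs_def)
lemma gsign_empty_right: "gsign A {} = 1" by (simp add: gsign_prs prs_def)

lemma card_prs_swap:
  assumes "finite A" "finite B" "A \<inter> B = {}"
  shows "card (prs A B) + card (prs B A) = card A * card B"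
proof -
  let ?sw = "\<lambda>(a::nat, b::nat). (b, a)"
  have eq: "A \<times> B = prs A B \<union> ?sw ` prs B A"
    using assms(3) by (auto simp: prs_def image_iff)
  have dis: "prs A B \<inter> ?sw ` prs B A = {}" by (auto simp: prs_def)
  have inj: "inj_on ?sw (prs B A)" by (auto simp: inj_on_def)
  have "card (A \<times> B) = card (prs A B) + card (?sw ` prs B A)"
    unfolding eq using dis finite_prs[OF assms(1,2)] finite_prs[OF assms(2,1)]
    by (simp add: card_Un_disjoint)
  then show ?thesis using card_image[OF inj] by (simp add: card_cartesian_product)
qed

lemma gsign_swap:
  assumes "finite A" "finite B" "A \<inter> B = {}"
  shows "gsign A B * gsign B A = (-1) ^ (card A * card B)"
  using card_prs_swap[OF assms] by (simp add: gsign_prs power_add[symmetric])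

lemma gsign_swap_even:
  assumes "finite A" "finite B" "A \<inter> B = {}" "even (card A)"
  shows "gsign A B = gsign B A"
proof -
  have "gsign A B * gsign B A = 1" using gsign_swap[OF assms(1-3)] assms(4) by simp
  then have "gsign A B * gsign B A * gsign B A = gsign B A" by simp
  then show ?thesis by (simp add: mult.assoc gsign_sq)
qed

lemma gmul_assoc: "gmul (gmul x y) z = gmul x (gmul y z)"
proof (rule ext)
  fix S
  show "gmul (gmul x y) z S = gmul x (gmul y z) S"
  proof (cases "finite S")
    case False
    then show ?thesis by (simp add: gmul_infinite)
  next
    case True
    define g where "g B C = gsign B C * gsign (B \<union> C) (S - B - C) * x B * y C * z (S - B - C)" for B C
    have L: "gmul (gmul x y) z S = (\<Sum>B\<in>Pow S. \<Sum>C\<in>Pow (S - B). g B C)"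
    proof -
      have "gmul (gmul x y) z S = (\<Sum>A\<in>Pow S. \<Sum>B\<in>Pow A. gsign A (S - A) * (gsign B (A - B) * x B * y (A - B)) * z (S - A))"
        unfolding gmul_apply by (simp add: sum_distrib_left sum_distrib_right)
      also have "\<dots> = (\<Sum>A\<in>Pow S. \<Sum>B\<in>{B\<in>Pow S. B \<subseteq> A}. gsign A (S - A) * (gsign B (A - B) * x B * y (A - B)) * z (S - A))"
      proof (rule sum.cong)
        fix A assume "A \<in> Pow S"
        then have "Pow A = {B\<in>Pow S. B \<subseteq> A}" by auto
        then show "(\<Sum>B\<in>Pow A. gsign A (S - A) * (gsign B (A - B) * x B * y (A - B)) * z (S - A)) =
          (\<Sum>B\<in>{B\<in>Pow S. B \<subseteq> A}. gsign A (S - A) * (gsign B (A - B) * x B * y (A - B)) * z (S - A))"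
          by simp
      qed simp
      also have "\<dots> = (\<Sum>B\<in>Pow S. \<Sum>A\<in>{A\<in>Pow S. B \<subseteq> A}. gsign A (S - A) * (gsign B (A - B) * x B * y (A - B)) * z (S - A))"
        using True by (intro sum.swap_restrict) auto
      also have "\<dots> = (\<Sum>B\<in>Pow S. \<Sum>C\<in>Pow (S - B). g B C)"
      proof (rule sum.cong)
        fix B assume B: "B \<in> Pow S"
        show "(\<Sum>A\<in>{A\<in>Pow S. B \<subseteq> A}. gsign A (S - A) * (gsign B (A - B) * x B * y (A - B)) * z (S - A)) =
          (\<Sum>C\<in>Pow (S - B). g B C)"
        proof (rule sym, rule sum.reindex_bij_witness[of _ "\<lambda>A. A - B" "\<lambda>C. B \<union> C"])
          fix C assume C: "C \<in> Pow (S - B)"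
          show "B \<union> C - B = C" using C by auto
          show "B \<union> C \<in> {A \<in> Pow S. B \<subseteq> A}" using B C by auto
          have "S - (B \<union> C) = S - B - C" by auto
          moreover have "B \<union> C - B = C" using C by auto
          ultimately show "gsign (B \<union> C) (S - (B \<union> C)) * (gsign B (B \<union> C - B) * x B * y (B \<union> C - B)) * z (S - (B \<union> C)) = g B C"
            unfolding g_def by (simp add: algebra_simps)
        next
          fix A assume A: "A \<in> {A \<in> Pow S. B \<subseteq> A}"
          show "B \<union> (A - B) = A" using A by auto
          show "A - B \<in> Pow (S - B)" using A by auto
        qed
      qed simp
      finally show ?thesis .
    qed
    have R: "gmul x (gmul y z) S = (\<Sum>B\<in>Pow S. \<Sum>C\<in>Pow (S - B). g B C)"
    proof -
      have "gmul x (gmul y z) S = (\<Sum>B\<in>Pow S. \<Sum>C\<in>Pow (S - B). gsign B (S - B) * x B * (gsign C (S - B - C) * y C * z (S - B - C)))"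
        unfolding gmul_apply by (simp add: sum_distrib_left)
      also have "\<dots> = (\<Sum>B\<in>Pow S. \<Sum>C\<in>Pow (S - B). g B C)"
      proof (intro sum.cong refl)
        fix B C assume B: "B \<in> Pow S" and C: "C \<in> Pow (S - B)"
        define D where "D = S - B - C"
        have fB: "finite B" and fC: "finite C" and fD: "finite D"
          using B C True by (auto simp: D_def intro: finite_subset)
        have d1: "B \<inter> C = {}" "B \<inter> D = {}" "C \<inter> D = {}" using C by (auto simp: D_def)
        have SB: "S - B = C \<union> D" using C by (auto simp: D_def)
        have s1: "gsign B (S - B) = gsign B C * gsign B D"
          unfolding SB by (rule gsign_Un_right[OF fB fC fD d1(3)])
        have s2: "gsign (B \<union> C) D = gsign B D * gsign C D"
          by (rule gsign_Un_left[OF fB fC fD d1(1)])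
        show "gsign B (S - B) * x B * (gsign C (S - B - C) * y C * z (S - B - C)) = g B C"
          unfolding g_def D_def[symmetric] s1 s2 by (simp add: algebra_simps)
      qed
      finally show ?thesis .
    qed
    show ?thesis using L R by simp
  qed
qed

lemma fsupp_gmul: "fsupp (gmul x y)"
  unfolding fsupp_def using gmul_infinite by blast

lemma gmul_gone_right: "fsupp x \<Longrightarrow> gmul x gone = x"
  by (auto simp: fun_eq_iff gone_ind gmul_ind_right gsign_empty_right fsupp_def)

lemma gmul_gone_left: "fsupp x \<Longrightarrow> gmul gone x = x"
  by (auto simp: fun_eq_iff gone_ind gmul_ind_left gsign_empty_left fsupp_def)

lemma gpar_gmul: "gpar (gmul x y) = gmul (gpar x) (gpar y)"
proof (rule ext)
  fix S
  show "gpar (gmul x y) S = gmul (gpar x) (gpar y) S"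
  proof (cases "finite S")
    case True
    have "gpar (gmul x y) S = (\<Sum>A\<in>Pow S. (-1) ^ card S * (gsign A (S - A) * x A * y (S - A)))"
      by (simp add: gpar_def gmul_apply sum_distrib_left)
    also have "\<dots> = gmul (gpar x) (gpar y) S"
      unfolding gmul_apply gpar_def
    proof (rule sum.cong)
      fix A assume "A \<in> Pow S"
      then have "card S = card A + card (S - A)" using True
        by (metis PowD card_Diff_subset card_mono finite_subset le_add_diff_inverse)
      then show "(-1) ^ card S * (gsign A (S - A) * x A * y (S - A)) =
          gsign A (S - A) * ((-1) ^ card A * x A) * ((-1) ^ card (S - A) * y (S - A))"
        by (simp add: power_add algebra_simps)
    qed simp
    finally show ?thesis .
  qed (simp add: gpar_def gmul_infinite)
qed

lemma gpar_gadd: "gpar (gadd x y) = gadd (gpar x) (gpar y)"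
  by (simp add: gpar_def gadd_def fun_eq_iff algebra_simps)
lemma gpar_gsmul: "gpar (gsmul c x) = gsmul c (gpar x)"
  by (simp add: gpar_def gsmul_def fun_eq_iff algebra_simps)
lemma gpar_gpar: "gpar (gpar x) = x"
  by (simp add: gpar_def fun_eq_iff power_mult_distrib[symmetric])
lemma gpar_gz: "gpar gz = gz" by (simp add: gpar_def gz_def)
lemma gpar_gone: "gpar gone = gone" by (simp add: gpar_def gone_def fun_eq_iff)
lemma gpar_gen: "gpar (gen i) = gsmul (-1) (gen i)"
  by (simp add: gpar_def gen_def gsmul_def fun_eq_iff)
lemma fsupp_gpar: "fsupp x \<Longrightarrow> fsupp (gpar x)"
  by (simp add: fsupp_def gpar_def)

lemma gen_comm: "gmul x (gen i) = gmul (gen i) (gpar x)"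
proof (rule ext)
  fix S
  show "gmul x (gen i) S = gmul (gen i) (gpar x) S"
  proof (cases "i \<in> S \<and> finite S")
    case True
    define B where "B = S - {i}"
    have fB: "finite B" using True by (simp add: B_def)
    have d: "B \<inter> {i} = {}" by (simp add: B_def)
    have sw: "gsign B {i} * gsign {i} B = (-1) ^ card B"
      using gsign_swap[OF fB _ d] by simp
    have "gsign B {i} = gsign B {i} * (gsign {i} B * gsign {i} B)" by (simp add: gsign_sq)
    also have "\<dots> = (-1) ^ card B * gsign {i} B" using sw by (simp add: algebra_simps)
    finally have e: "gsign B {i} = (-1) ^ card B * gsign {i} B" .
    show ?thesis using True e
      by (simp add: gen_ind gmul_ind_left gmul_ind_right gpar_def B_def[symmetric])
  next
    case False
    then show ?thesis by (auto simp: gen_ind gmul_ind_left gmul_ind_right)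
  qed
qed

lemma gen_sq: "gmul (gen i) (gen i) = gz"
proof (rule ext)
  fix S
  show "gmul (gen i) (gen i) S = gz S"
    unfolding gen_ind gmul_ind_left by (auto simp: ind_def gz_def)
qed

lemma gmul_comm_even:
  assumes "evn x" "evn y"
  shows "gmul x y = gmul y x"
proof (rule ext)
  fix S
  show "gmul x y S = gmul y x S"
  proof (cases "finite S")
    case True
    have "gmul y x S = (\<Sum>A\<in>Pow S. gsign (S - A) A * y (S - A) * x A)"
      unfolding gmul_apply
    proof (rule sum.reindex_bij_witness[of _ "\<lambda>A. S - A" "\<lambda>A. S - A"])
      fix A assume "A \<in> Pow S"
      then show "S - (S - A) = A" "S - A \<in> Pow S" by auto
      show "gsign (S - (S - A)) (S - A) * y (S - (S - A)) * x (S - A) = gsign A (S - A) * y A * x (S - A)"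
        using \<open>A \<in> Pow S\<close> by (simp add: Diff_Diff_Int Int_absorb1)
    next
      fix A assume "A \<in> Pow S"
      then show "S - (S - A) = A" "S - A \<in> Pow S" by auto
    qed
    also have "\<dots> = gmul x y S"
      unfolding gmul_apply
    proof (rule sum.cong)
      fix A assume A: "A \<in> Pow S"
      show "gsign (S - A) A * y (S - A) * x A = gsign A (S - A) * x A * y (S - A)"
      proof (cases "x A = 0 \<or> y (S - A) = 0")
        case False
        then have "even (card A)" "finite A" using assms(1) by (auto simp: evn_def)
        moreover have "finite (S - A)" using True by simp
        ultimately have "gsign A (S - A) = gsign (S - A) A"
          by (intro gsign_swap_even) auto
        then show ?thesis by simp
      qed auto
    qed simp
    finally show ?thesis by simp
  qed (simp add: gmul_infinite)
qed

lemma evn_gmul: "evn (gmul x y)" if "evn x" "evn y"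
proof -
  { fix S assume "gmul x y S \<noteq> 0"
    from gmul_nz[OF this] obtain A where A: "finite S" "A \<subseteq> S" "x A \<noteq> 0" "y (S - A) \<noteq> 0" by blast
    have "even (card A)" "even (card (S - A))" using A that by (auto simp: evn_def)
    moreover have "card S = card A + card (S - A)"
      using A by (metis card_Diff_subset card_mono finite_subset le_add_diff_inverse)
    ultimately have "finite S \<and> even (card S)" using A by simp }
  then show ?thesis by (simp add: evn_def)
qed

lemma evn_gadd: "evn x \<Longrightarrow> evn y \<Longrightarrow> evn (gadd x y)"
  unfolding evn_def gadd_def by (metis add.left_neutral add.right_neutral)
lemma evn_gsmul: "evn x \<Longrightarrow> evn (gsmul c x)"
  by (auto simp: evn_def gsmul_def)
lemma evn_gz: "evn gz" by (simp add: evn_def gz_def)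
lemma evn_gone: "evn gone" by (simp add: evn_def gone_def)
lemma evn_fsupp: "evn x \<Longrightarrow> fsupp x" by (simp add: evn_def fsupp_def)

datatype tr = E | L int | N tr tr

fun sem :: "nat \<Rightarrow> tr \<Rightarrow> grass" where
  "sem i E = gz"
| "sem i (L c) = gsmul (of_int c) gone"
| "sem i (N l r) = gadd (sem (Suc i) l) (gmul (gen i) (sem (Suc i) r))"

lemma sem_supp: "sem i t S \<noteq> 0 \<Longrightarrow> finite S \<and> (\<forall>x\<in>S. i \<le> x)"
proof (induction t arbitrary: i S)
  case E then show ?case by (simp add: gz_def)
next
  case (L c) then show ?case by (simp add: gsmul_def gone_def split: if_splits)
next
  case (N l r)
  show ?case
  proof (cases "sem (Suc i) l S = 0")
    case False
    then show ?thesis using N.IH(1)[of "Suc i" S] by fastforce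
  next
    case True
    then have "gmul (gen i) (sem (Suc i) r) S \<noteq> 0" using N.prems by (simp add: gadd_def)
    then have h: "{i} \<subseteq> S \<and> finite S \<and> sem (Suc i) r (S - {i}) \<noteq> 0"
      unfolding gen_ind gmul_ind_left by (auto split: if_splits)
    then have a: "\<forall>x\<in>S - {i}. Suc i \<le> x" using N.IH(2) by blast
    have "\<forall>x\<in>S. i \<le> x"
    proof
      fix x assume "x \<in> S"
      show "i \<le> x"
      proof (cases "x = i")
        case False
        then have "x \<in> S - {i}" using \<open>x \<in> S\<close> by simp
        then have "Suc i \<le> x" using a by blast
        then show ?thesis by simp
      qed simp
    qed
    then show ?thesis using h by blast
  qed
qed

lemma fsupp_sem: "fsupp (sem i t)"
  using sem_supp by (auto simp: fsupp_def)

fun scaleT :: "int \<Rightarrow> tr \<Rightarrow> tr" where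
  "scaleT k E = E"
| "scaleT k (L a) = L (k * a)"
| "scaleT k (N l r) = N (scaleT k l) (scaleT k r)"

fun parT :: "tr \<Rightarrow> tr" where
  "parT E = E"
| "parT (L a) = L a"
| "parT (N l r) = N (parT l) (scaleT (-1) (parT r))"

fun addT :: "tr \<Rightarrow> tr \<Rightarrow> tr" where
  "addT E v = v"
| "addT (L a) E = L a"
| "addT (N l r) E = N l r"
| "addT (L a) (L b) = L (a + b)"
| "addT (L a) (N l r) = N (addT (L a) l) r"
| "addT (N l r) (L a) = N (addT l (L a)) r"
| "addT (N l r) (N l' r') = N (addT l l') (addT r r')"

fun mulT :: "bool \<Rightarrow> bool \<Rightarrow> tr \<Rightarrow> tr \<Rightarrow> tr" where
  "mulT f s E v = E"
| "mulT f s (L a) v = scaleT (if s then - a else a) v"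
| "mulT f s (N l r) E = E"
| "mulT f s (N l r) (L b) = scaleT (if s then - b else b) (if f then parT (N l r) else N l r)"
| "mulT f s (N l r) (N l' r') = N (mulT f s l l') (addT (mulT (\<not> f) s l r') (mulT f (s \<noteq> f) r l'))"

fun mkN :: "tr \<Rightarrow> tr \<Rightarrow> tr" where
  "mkN E E = E"
| "mkN l r = N l r"

fun pruneT :: "tr \<Rightarrow> tr" where
  "pruneT E = E"
| "pruneT (L a) = (if a = 0 then E else L a)"
| "pruneT (N l r) = mkN (pruneT l) (pruneT r)"

definition sg :: "bool \<Rightarrow> complex" where "sg b = (if b then -1 else 1)"
definition pp :: "bool \<Rightarrow> grass \<Rightarrow> grass" where "pp f x = (if f then gpar x else x)"

lemma gadd_assoc: "gadd (gadd x y) z = gadd x (gadd y z)"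
  by (simp add: gadd_def fun_eq_iff algebra_simps)
lemma gadd_commute: "gadd x y = gadd y x"
  by (simp add: gadd_def fun_eq_iff algebra_simps)
lemma gadd_left_commute: "gadd x (gadd y z) = gadd y (gadd x z)"
  by (simp add: gadd_def fun_eq_iff algebra_simps)

lemma sem_scaleT: "sem i (scaleT k t) = gsmul (of_int k) (sem i t)"
  by (induction t arbitrary: i)
     (simp_all add: gsmul_gz gsmul_gsmul gsmul_gadd gmul_gsmul_right)

lemma sem_parT: "sem i (parT t) = gpar (sem i t)"
  by (induction t arbitrary: i)
     (simp_all add: sem_scaleT gpar_gz gpar_gsmul gpar_gone gpar_gadd gpar_gmul gpar_gen
       gmul_gsmul_left gmul_gsmul_right)

lemma gsmul_add: "gsmul (c + d) x = gadd (gsmul c x) (gsmul d x)"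
  by (simp add: gsmul_def gadd_def fun_eq_iff algebra_simps)

lemma sem_addT: "sem i (addT u v) = gadd (sem i u) (sem i v)"
  by (induction u v arbitrary: i rule: addT.induct)
     (simp_all add: gsmul_add gadd_gz_left gadd_gz_right gmul_gadd_right gadd_assoc gadd_commute gadd_left_commute)

lemma sem_mkN: "sem i (mkN l r) = sem i (N l r)"
  by (cases "(l, r)" rule: mkN.cases) (simp_all add: gadd_gz_left gmul_gz_right)

lemma sem_pruneT: "sem i (pruneT t) = sem i t"
proof (induction t arbitrary: i)
  case (L a) then show ?case by (simp add: gsmul_def gz_def fun_eq_iff)
qed (simp_all add: sem_mkN)

lemma pp_gadd: "pp f (gadd x y) = gadd (pp f x) (pp f y)"
  by (simp add: pp_def gpar_gadd)
lemma pp_gsmul: "pp f (gsmul c x) = gsmul c (pp f x)"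
  by (simp add: pp_def gpar_gsmul)
lemma pp_gz: "pp f gz = gz" by (simp add: pp_def gpar_gz)
lemma pp_gone: "pp f gone = gone" by (simp add: pp_def gpar_gone)
lemma fsupp_pp: "fsupp x \<Longrightarrow> fsupp (pp f x)" by (simp add: pp_def fsupp_gpar)

lemma sem_mulT: "sem i (mulT f s u v) = gsmul (sg s) (gmul (pp f (sem i u)) (sem i v))"
proof (induction f s u v arbitrary: i rule: mulT.induct)
  case (1 f s v)
  then show ?case by (simp add: pp_gz gmul_gz_left gsmul_gz)
next
  case (2 f s a v)
  then show ?case
    by (simp add: sem_scaleT pp_gsmul pp_gone gmul_gsmul_left gmul_gone_left fsupp_sem gsmul_gsmul sg_def)
next
  case (3 f s l r)
  then show ?case by (simp add: gmul_gz_right gsmul_gz)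
next
  case (4 f s l r b)
  have "sem i (if f then parT (N l r) else N l r) = pp f (sem i (N l r))"
    by (cases f) (simp_all add: pp_def sem_parT del: parT.simps sem.simps)
  then show ?case
    by (simp only: mulT.simps sem_scaleT sem.simps(2) gmul_gsmul_right gmul_gone_right
        fsupp_pp fsupp_sem gsmul_gsmul) (simp add: sg_def)
next
  case (5 f s l r l' r')
  define a where "a = sem (Suc i) l"
  define b where "b = sem (Suc i) r"
  define a' where "a' = sem (Suc i) l'"
  define b' where "b' = sem (Suc i) r'"
  define g where "g = gen i"
  define P where "P = pp f a"
  define Q where "Q = pp f b"
  have ppN: "pp f (sem i (N l r)) = gadd P (gsmul (sg f) (gmul g Q))"
    by (simp add: gsmul_one pp_def P_def Q_def a_def b_def g_def sg_def gpar_gadd gpar_gmul gpar_gen gmul_gsmul_left)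
  have gP: "gpar P = pp (\<not> f) a" by (simp add: P_def pp_def gpar_gpar)
  have t2: "gmul P (gmul g b') = gmul g (gmul (pp (\<not> f) a) b')"
    by (simp add: gmul_assoc[symmetric] g_def gen_comm gP)
  have t3: "gmul (gsmul (sg f) (gmul g Q)) a' = gsmul (sg f) (gmul g (gmul Q a'))"
    by (simp add: gmul_gsmul_left gmul_assoc)
  have t4: "gmul (gsmul (sg f) (gmul g Q)) (gmul g b') = gz"
  proof -
    have "gmul (gmul g Q) (gmul g b') = gmul g (gmul (gmul Q g) b')"
      by (simp add: gmul_assoc)
    also have "\<dots> = gmul (gmul g g) (gmul (gpar Q) b')"
    proof -
      have "gmul Q g = gmul g (gpar Q)" unfolding g_def by (rule gen_comm)
      then show ?thesis by (simp only: gmul_assoc)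
    qed
    also have "\<dots> = gz" by (simp add: g_def gen_sq gmul_gz_left)
    finally show ?thesis by (simp add: gmul_gsmul_left gsmul_gz)
  qed
  have rhs: "gmul (pp f (sem i (N l r))) (sem i (N l' r')) =
      gadd (gmul P a') (gmul g (gadd (gmul (pp (\<not> f) a) b') (gsmul (sg f) (gmul Q a'))))"
    unfolding ppN
    by (simp add: a'_def[symmetric] b'_def[symmetric] g_def[symmetric] gmul_gadd_left gmul_gadd_right
        t2 t3 t4 gadd_gz_right gadd_assoc gmul_gsmul_right)
       (simp add: gadd_def fun_eq_iff algebra_simps)
  have IH1: "sem (Suc i) (mulT f s l l') = gsmul (sg s) (gmul P a')"
    using "5.IH"(1) by (simp add: P_def a_def a'_def)
  have IH2: "sem (Suc i) (mulT (\<not> f) s l r') = gsmul (sg s) (gmul (pp (\<not> f) a) b')"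
    using "5.IH"(2) by (simp add: a_def b'_def)
  have IH3: "sem (Suc i) (mulT f (s = (\<not> f)) r l') = gsmul (sg (s = (\<not> f))) (gmul Q a')"
    using "5.IH"(3) by (simp add: Q_def b_def a'_def)
  have sgm: "sg (s = (\<not> f)) = sg s * sg f" by (simp add: sg_def)
  show ?case
    unfolding rhs
    by (simp add: IH1 IH2 IH3 sem_addT g_def[symmetric] gsmul_gadd gmul_gadd_right gmul_gsmul_right
        gsmul_gsmul sgm)
qed

lemma sem_mul: "gmul (sem i u) (sem i v) = sem i (mulT False False u v)"
  by (simp add: sem_mulT sg_def pp_def gsmul_one)

lemma sem_add: "gadd (sem i u) (sem i v) = sem i (addT u v)"
  by (simp add: sem_addT)

lemma sem_smul: "gsmul (of_int k) (sem i u) = sem i (scaleT k u)"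
  by (simp add: sem_scaleT)

lemma sem_eqI: "pruneT t = pruneT t' \<Longrightarrow> sem i t = sem i t'"
  by (metis sem_pruneT)

fun monoT :: "int \<Rightarrow> bool list \<Rightarrow> tr" where
  "monoT c [] = L c"
| "monoT c (b # bs) = (if b then N E (monoT c bs) else N (monoT c bs) E)"

fun posn :: "nat \<Rightarrow> bool list \<Rightarrow> nat set" where
  "posn i [] = {}"
| "posn i (b # bs) = (if b then insert i (posn (Suc i) bs) else posn (Suc i) bs)"

lemma posn_ge: "x \<in> posn i bs \<Longrightarrow> i \<le> x"
  by (induction bs arbitrary: i) (auto split: if_splits dest: Suc_leD)

lemma finite_posn: "finite (posn i bs)"
  by (induction bs arbitrary: i) auto

lemma sem_monoT: "sem i (monoT c bs) = gsmul (of_int c) (ind (posn i bs))"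
proof (induction bs arbitrary: i)
  case Nil
  then show ?case by (simp add: gone_ind)
next
  case (Cons b bs)
  show ?case
  proof (cases b)
    case True
    define P where "P = posn (Suc i) bs"
    have d: "{i} \<inter> P = {}" using posn_ge[of i "Suc i" bs] by (auto simp: P_def)
    have "prs {i} P = {}"
      using posn_ge[of _ "Suc i" bs] by (force simp: prs_def P_def)
    then have s: "gsign {i} P = 1" by (simp add: gsign_prs)
    have "gmul (gen i) (ind P) = ind (insert i P)"
      unfolding gen_ind using gmul_ind_ind[of "{i}" P] d s finite_posn[of "Suc i" bs]
      by (simp add: P_def gsmul_one)
    then show ?thesis using True Cons.IH
      by (simp add: gadd_gz_left gmul_gsmul_right P_def)
  next
    case False
    then show ?thesis using Cons.IH by (simp add: gmul_gz_right gadd_gz_right)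
  qed
qed

lemma posn_replicate: "posn i (replicate n True) = {i..<i + n}"
  by (induction n arbitrary: i) auto

fun okT :: "bool \<Rightarrow> tr \<Rightarrow> bool" where
  "okT b E = True"
| "okT b (L a) = (b \<or> a = 0)"
| "okT b (N l r) = (okT b l \<and> okT (\<not> b) r)"

lemma okT_sem: "okT b t \<Longrightarrow> sem i t S \<noteq> 0 \<Longrightarrow> (even (card S) \<longleftrightarrow> b)"
proof (induction t arbitrary: b i S)
  case E then show ?case by (simp add: gz_def)
next
  case (L a) then show ?case by (auto simp: gsmul_def gone_def split: if_splits)
next
  case (N l r)
  show ?case
  proof (cases "sem (Suc i) l S = 0")
    case False
    then show ?thesis using N.IH(1)[of b "Suc i" S] N.prems by simp
  next
    case True
    then have "gmul (gen i) (sem (Suc i) r) S \<noteq> 0" using N.prems by (simp add: gadd_def)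
    then have h: "i \<in> S \<and> finite S \<and> sem (Suc i) r (S - {i}) \<noteq> 0"
      unfolding gen_ind gmul_ind_left by (auto split: if_splits)
    then have "even (card (S - {i})) \<longleftrightarrow> \<not> b" using N.IH(2)[of "\<not> b" "Suc i" "S - {i}"] N.prems by simp
    moreover have "card S = Suc (card (S - {i}))" using h by (metis card_Suc_Diff1)
    ultimately show ?thesis by simp
  qed
qed

lemma okT_evn: "okT True t \<Longrightarrow> evn (sem i t)"
  using okT_sem[of True t i] sem_supp[of i t] by (auto simp: evn_def)

lemma gtop_ind_gen: "foldl gmul gone (map gen [0..<n]) = ind {..<n}"
proof (induction n)
  case 0
  then show ?case by (simp add: gone_ind)
next
  case (Suc n)
  have d: "{..<n} \<inter> {n} = {}" by auto
  have "prs {..<n} {n} = {}" by (auto simp: prs_def)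
  then have s: "gsign {..<n} {n} = 1" by (simp add: gsign_prs)
  have "gmul (ind {..<n}) (gen n) = ind {..<Suc n}"
    unfolding gen_ind using gmul_ind_ind[of "{..<n}" "{n}"] d s
    by (simp add: gsmul_one lessThan_Suc insert_commute)
  then show ?case using Suc.IH by simp
qed

lemma gtop_ind: "gtop = ind {..<24}"
  unfolding gtop_def by (rule gtop_ind_gen)

typedef ev = "{x :: grass. evn x}" morphisms rep ev_abs
  by (rule exI[of _ gz]) (simp add: evn_gz)

lemma rep_evn: "evn (rep x)" using rep by simp
lemma abs_inv: "evn x \<Longrightarrow> rep (ev_abs x) = x" by (simp add: ev_abs_inverse)

instantiation ev :: comm_ring_1
begin
definition zero_ev_def: "0 = ev_abs gz"
definition one_ev_def: "1 = ev_abs gone"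
definition plus_ev_def: "x + y = ev_abs (gadd (rep x) (rep y))"
definition uminus_ev_def: "- x = ev_abs (gsmul (-1) (rep x))"
definition minus_ev_def: "x - y = ev_abs (gadd (rep x) (gsmul (-1) (rep y)))"
definition times_ev_def: "x * y = ev_abs (gmul (rep x) (rep y))"

lemma rep_zero: "rep 0 = gz" by (simp add: zero_ev_def abs_inv evn_gz)
lemma rep_one: "rep 1 = gone" by (simp add: one_ev_def abs_inv evn_gone)
lemma rep_plus: "rep (x + y) = gadd (rep x) (rep y)"
  by (simp add: plus_ev_def abs_inv evn_gadd rep_evn)
lemma rep_uminus: "rep (- x) = gsmul (-1) (rep x)"
  by (simp add: uminus_ev_def abs_inv evn_gsmul rep_evn)
lemma rep_minus: "rep (x - y) = gadd (rep x) (gsmul (-1) (rep y))"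
  by (simp add: minus_ev_def abs_inv evn_gadd evn_gsmul rep_evn)
lemma rep_times: "rep (x * y) = gmul (rep x) (rep y)"
  by (simp add: times_ev_def abs_inv evn_gmul rep_evn)

lemma ev_eqI: "rep x = rep y \<Longrightarrow> x = y" by (simp add: rep_inject)

instance
proof
  fix a b c :: ev
  show "a * b * c = a * (b * c)" by (rule ev_eqI) (simp add: rep_times gmul_assoc)
  show "a * b = b * a" by (rule ev_eqI) (simp add: rep_times gmul_comm_even rep_evn)
  show "1 * a = a" by (rule ev_eqI) (simp add: rep_times rep_one gmul_gone_left evn_fsupp rep_evn)
  show "a + b + c = a + (b + c)" by (rule ev_eqI) (simp add: rep_plus gadd_assoc)
  show "a + b = b + a" by (rule ev_eqI) (simp add: rep_plus gadd_commute)
  show "0 + a = a" by (rule ev_eqI) (simp add: rep_plus rep_zero gadd_gz_left)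
  show "- a + a = 0" by (rule ev_eqI) (simp add: rep_plus rep_zero rep_uminus gadd_def gsmul_def gz_def)
  show "a - b = a + - b" by (rule ev_eqI) (simp add: rep_plus rep_minus rep_uminus)
  show "(a + b) * c = a * c + b * c" by (rule ev_eqI) (simp add: rep_plus rep_times gmul_gadd_left)
  show "(0::ev) \<noteq> 1"
  proof
    assume "(0::ev) = 1"
    then have "rep (0::ev) = rep 1" by simp
    then have "gz {} = gone {}" by (simp add: rep_zero rep_one)
    then show False by (simp add: gz_def gone_def)
  qed
qed
end

lemma rep_of_nat: "rep (of_nat n) = gsmul (of_nat n) gone"
proof (induction n)
  case 0 then show ?case by (simp add: rep_zero gsmul_def gz_def fun_eq_iff)
next
  case (Suc n) then show ?case
    by (simp add: rep_plus rep_one gsmul_def gadd_def fun_eq_iff algebra_simps)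
qed

lemma ring4: fixes a b c d :: "'a::comm_ring_1"
  assumes "a*a=0" "b*b=0" "c*c=0" "d*d=0"
  shows "(a+b+c+d)*((a+b+c+d)*((a+b+c+d)*(a+b+c+d))) = 24*((a*b)*(c*d))"
proof -
  have z: "a*(a*z) = 0" "b*(b*z) = 0" "c*(c*z) = 0" "d*(d*z) = 0" for z
    using assms by (metis mult.assoc mult_zero_left)+
  define u where "u = a+b"
  define v where "v = c+d"
  have u2: "u*u = 2*(a*b)" unfolding u_def using assms by (simp add: algebra_simps)
  have v2: "v*v = 2*(c*d)" unfolding v_def using assms by (simp add: algebra_simps)
  have u3: "u*(u*u) = 0" unfolding u2 unfolding u_def by (simp add: algebra_simps z)
  have v3: "v*(v*v) = 0" unfolding v2 unfolding v_def by (simp add: algebra_simps z)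
  have u3w: "u*(u*(u*w)) = 0" for w using u3 by (metis mult.assoc mult_zero_left)
  have v3w: "v*(v*(v*w)) = 0" for w using v3 by (metis mult.assoc mult_zero_left)
  have e: "(u+v)*((u+v)*((u+v)*(u+v))) = 6*((u*u)*(v*v)) + 4*(u*(u*u))*v + 4*u*(v*(v*v)) + u*(u*(u*u)) + v*(v*(v*v))"
    by (simp add: algebra_simps)
  have "(u+v)*((u+v)*((u+v)*(u+v))) = 6*((u*u)*(v*v))"
    unfolding e by (simp add: mult.assoc u3 v3 u3w v3w)
  also have "\<dots> = 24*((a*b)*(c*d))" unfolding u2 v2 by (simp add: algebra_simps)
  finally show ?thesis unfolding u_def v_def by (simp add: add.assoc)
qed

lemma main_assembly:
  fixes X Y0 Y1 Y2 Y3 W :: grass and k :: complex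
  assumes eX: "X = gadd (gadd (gadd Y0 Y1) Y2) Y3"
    and ev: "evn Y0" "evn Y1" "evn Y2" "evn Y3"
    and sq: "gmul Y0 Y0 = gz" "gmul Y1 Y1 = gz" "gmul Y2 Y2 = gz" "gmul Y3 Y3 = gz"
  shows "gpow X 4 = gsmul 24 (gmul (gmul Y0 Y1) (gmul Y2 Y3))"
proof -
  define y0 where "y0 = ev_abs Y0"
  define y1 where "y1 = ev_abs Y1"
  define y2 where "y2 = ev_abs Y2"
  define y3 where "y3 = ev_abs Y3"
  have r: "rep y0 = Y0" "rep y1 = Y1" "rep y2 = Y2" "rep y3 = Y3"
    using ev by (simp_all add: y0_def y1_def y2_def y3_def abs_inv)
  have z: "y0*y0 = 0" "y1*y1 = 0" "y2*y2 = 0" "y3*y3 = 0"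
    by (rule ev_eqI, simp add: rep_times rep_zero r sq)+
  have rx: "rep (y0+y1+y2+y3) = X" by (simp add: rep_plus r eX)
  have fX: "fsupp X" using rx rep_evn evn_fsupp by metis
  have "gpow X 4 = gmul X (gmul X (gmul X (gmul X gone)))"
    by (simp add: gpow_def eval_nat_numeral)
  also have "\<dots> = gmul X (gmul X (gmul X X))" by (simp add: gmul_gone_right fX)
  also have "\<dots> = rep ((y0+y1+y2+y3)*((y0+y1+y2+y3)*((y0+y1+y2+y3)*(y0+y1+y2+y3))))"
    by (simp only: rep_times rx)
  also have "\<dots> = rep (24*((y0*y1)*(y2*y3)))" by (simp only: ring4[OF z])
  also have "\<dots> = gsmul 24 (gmul (gmul Y0 Y1) (gmul Y2 Y3))"
  proof -
    have "rep (24::ev) = gsmul 24 gone"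
      using rep_of_nat[of 24] by simp
    then show ?thesis
      by (simp add: rep_times r gmul_gsmul_left gmul_gone_left fsupp_gmul)
  qed
  finally show ?thesis .
qed

lemma sum4: "(\<Sum>\<mu><(4::nat). f \<mu>) = f 0 + f 1 + f 2 + (f 3::complex)"
  by (simp add: eval_nat_numeral add.commute add.left_commute)

lemma gtab:
  "gamma_low 0 0 0 = 0"
  "gamma_low 0 0 (Suc 0) = 0"
  "gamma_low 0 0 2 = 0"
  "gamma_low 0 0 3 = - 1"
  "gamma_low 0 (Suc 0) 0 = 0"
  "gamma_low 0 (Suc 0) (Suc 0) = 0"
  "gamma_low 0 (Suc 0) 2 = 1"
  "gamma_low 0 (Suc 0) 3 = 0"
  "gamma_low 0 2 0 = 0"
  "gamma_low 0 2 (Suc 0) = 1"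
  "gamma_low 0 2 2 = 0"
  "gamma_low 0 2 3 = 0"
  "gamma_low 0 3 0 = - 1"
  "gamma_low 0 3 (Suc 0) = 0"
  "gamma_low 0 3 2 = 0"
  "gamma_low 0 3 3 = 0"
  "gamma_low (Suc 0) 0 0 = 0"
  "gamma_low (Suc 0) 0 (Suc 0) = 0"
  "gamma_low (Suc 0) 0 2 = 1"
  "gamma_low (Suc 0) 0 3 = 0"
  "gamma_low (Suc 0) (Suc 0) 0 = 0"
  "gamma_low (Suc 0) (Suc 0) (Suc 0) = 0"
  "gamma_low (Suc 0) (Suc 0) 2 = 0"
  "gamma_low (Suc 0) (Suc 0) 3 = - 1"
  "gamma_low (Suc 0) 2 0 = 1"
  "gamma_low (Suc 0) 2 (Suc 0) = 0"
  "gamma_low (Suc 0) 2 2 = 0"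
  "gamma_low (Suc 0) 2 3 = 0"
  "gamma_low (Suc 0) 3 0 = 0"
  "gamma_low (Suc 0) 3 (Suc 0) = - 1"
  "gamma_low (Suc 0) 3 2 = 0"
  "gamma_low (Suc 0) 3 3 = 0"
  "gamma_low 2 0 0 = 0"
  "gamma_low 2 0 (Suc 0) = 0"
  "gamma_low 2 0 2 = \<i>"
  "gamma_low 2 0 3 = 0"
  "gamma_low 2 (Suc 0) 0 = 0"
  "gamma_low 2 (Suc 0) (Suc 0) = 0"
  "gamma_low 2 (Suc 0) 2 = 0"
  "gamma_low 2 (Suc 0) 3 = \<i>"
  "gamma_low 2 2 0 = \<i>"
  "gamma_low 2 2 (Suc 0) = 0"
  "gamma_low 2 2 2 = 0"
  "gamma_low 2 2 3 = 0"
  "gamma_low 2 3 0 = 0"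
  "gamma_low 2 3 (Suc 0) = \<i>"
  "gamma_low 2 3 2 = 0"
  "gamma_low 2 3 3 = 0"
  "gamma_low 3 0 0 = 0"
  "gamma_low 3 0 (Suc 0) = 0"
  "gamma_low 3 0 2 = 0"
  "gamma_low 3 0 3 = - 1"
  "gamma_low 3 (Suc 0) 0 = 0"
  "gamma_low 3 (Suc 0) (Suc 0) = 0"
  "gamma_low 3 (Suc 0) 2 = - 1"
  "gamma_low 3 (Suc 0) 3 = 0"
  "gamma_low 3 2 0 = 0"
  "gamma_low 3 2 (Suc 0) = - 1"
  "gamma_low 3 2 2 = 0"
  "gamma_low 3 2 3 = 0"
  "gamma_low 3 3 0 = - 1"
  "gamma_low 3 3 (Suc 0) = 0"
  "gamma_low 3 3 2 = 0"
  "gamma_low 3 3 3 = 0"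
  by (simp_all add: gamma_low_def sum4 gamma_up_def epsilon_def eps2_def sigma_def sigmat_def)

lemma b4tab:
  "beta4 0 0 0 0 = 0"
  "beta4 0 0 0 (Suc 0) = 0"
  "beta4 0 0 0 2 = 0"
  "beta4 0 0 0 3 = 0"
  "beta4 0 0 (Suc 0) 0 = 0"
  "beta4 0 0 (Suc 0) (Suc 0) = 0"
  "beta4 0 0 (Suc 0) 2 = 0"
  "beta4 0 0 (Suc 0) 3 = 0"
  "beta4 0 0 2 0 = 0"
  "beta4 0 0 2 (Suc 0) = 0"
  "beta4 0 0 2 2 = 0"
  "beta4 0 0 2 3 = 0"
  "beta4 0 0 3 0 = 0"
  "beta4 0 0 3 (Suc 0) = 0"
  "beta4 0 0 3 2 = 0"
  "beta4 0 0 3 3 = 0"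
  "beta4 0 (Suc 0) 0 0 = 0"
  "beta4 0 (Suc 0) 0 (Suc 0) = 0"
  "beta4 0 (Suc 0) 0 2 = 0"
  "beta4 0 (Suc 0) 0 3 = 0"
  "beta4 0 (Suc 0) (Suc 0) 0 = 0"
  "beta4 0 (Suc 0) (Suc 0) (Suc 0) = 0"
  "beta4 0 (Suc 0) (Suc 0) 2 = 0"
  "beta4 0 (Suc 0) (Suc 0) 3 = 0"
  "beta4 0 (Suc 0) 2 0 = 0"
  "beta4 0 (Suc 0) 2 (Suc 0) = 0"
  "beta4 0 (Suc 0) 2 2 = 0"
  "beta4 0 (Suc 0) 2 3 = 0"
  "beta4 0 (Suc 0) 3 0 = 0"
  "beta4 0 (Suc 0) 3 (Suc 0) = 0"
  "beta4 0 (Suc 0) 3 2 = 0"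
  "beta4 0 (Suc 0) 3 3 = 0"
  "beta4 0 2 0 0 = 0"
  "beta4 0 2 0 (Suc 0) = 0"
  "beta4 0 2 0 2 = - 1"
  "beta4 0 2 0 3 = 0"
  "beta4 0 2 (Suc 0) 0 = 0"
  "beta4 0 2 (Suc 0) (Suc 0) = 0"
  "beta4 0 2 (Suc 0) 2 = 0"
  "beta4 0 2 (Suc 0) 3 = 0"
  "beta4 0 2 2 0 = - 1"
  "beta4 0 2 2 (Suc 0) = 0"
  "beta4 0 2 2 2 = 0"
  "beta4 0 2 2 3 = 0"
  "beta4 0 2 3 0 = 0"
  "beta4 0 2 3 (Suc 0) = 0"
  "beta4 0 2 3 2 = 0"
  "beta4 0 2 3 3 = 0"
  "beta4 0 3 0 0 = 0"
  "beta4 0 3 0 (Suc 0) = 0"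
  "beta4 0 3 0 2 = 0"
  "beta4 0 3 0 3 = 0"
  "beta4 0 3 (Suc 0) 0 = 0"
  "beta4 0 3 (Suc 0) (Suc 0) = 0"
  "beta4 0 3 (Suc 0) 2 = - 1"
  "beta4 0 3 (Suc 0) 3 = 0"
  "beta4 0 3 2 0 = 0"
  "beta4 0 3 2 (Suc 0) = - 1"
  "beta4 0 3 2 2 = 0"
  "beta4 0 3 2 3 = 0"
  "beta4 0 3 3 0 = 0"
  "beta4 0 3 3 (Suc 0) = 0"
  "beta4 0 3 3 2 = 0"
  "beta4 0 3 3 3 = 0"
  "beta4 (Suc 0) 0 0 0 = 0"
  "beta4 (Suc 0) 0 0 (Suc 0) = 0"
  "beta4 (Suc 0) 0 0 2 = 0"
  "beta4 (Suc 0) 0 0 3 = 0"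
  "beta4 (Suc 0) 0 (Suc 0) 0 = 0"
  "beta4 (Suc 0) 0 (Suc 0) (Suc 0) = 0"
  "beta4 (Suc 0) 0 (Suc 0) 2 = 0"
  "beta4 (Suc 0) 0 (Suc 0) 3 = 0"
  "beta4 (Suc 0) 0 2 0 = 0"
  "beta4 (Suc 0) 0 2 (Suc 0) = 0"
  "beta4 (Suc 0) 0 2 2 = 0"
  "beta4 (Suc 0) 0 2 3 = 0"
  "beta4 (Suc 0) 0 3 0 = 0"
  "beta4 (Suc 0) 0 3 (Suc 0) = 0"
  "beta4 (Suc 0) 0 3 2 = 0"
  "beta4 (Suc 0) 0 3 3 = 0"
  "beta4 (Suc 0) (Suc 0) 0 0 = 0"
  "beta4 (Suc 0) (Suc 0) 0 (Suc 0) = 0"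
  "beta4 (Suc 0) (Suc 0) 0 2 = 0"
  "beta4 (Suc 0) (Suc 0) 0 3 = 0"
  "beta4 (Suc 0) (Suc 0) (Suc 0) 0 = 0"
  "beta4 (Suc 0) (Suc 0) (Suc 0) (Suc 0) = 0"
  "beta4 (Suc 0) (Suc 0) (Suc 0) 2 = 0"
  "beta4 (Suc 0) (Suc 0) (Suc 0) 3 = 0"
  "beta4 (Suc 0) (Suc 0) 2 0 = 0"
  "beta4 (Suc 0) (Suc 0) 2 (Suc 0) = 0"
  "beta4 (Suc 0) (Suc 0) 2 2 = 0"
  "beta4 (Suc 0) (Suc 0) 2 3 = 0"
  "beta4 (Suc 0) (Suc 0) 3 0 = 0"
  "beta4 (Suc 0) (Suc 0) 3 (Suc 0) = 0"
  "beta4 (Suc 0) (Suc 0) 3 2 = 0"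
  "beta4 (Suc 0) (Suc 0) 3 3 = 0"
  "beta4 (Suc 0) 2 0 0 = 0"
  "beta4 (Suc 0) 2 0 (Suc 0) = 0"
  "beta4 (Suc 0) 2 0 2 = 0"
  "beta4 (Suc 0) 2 0 3 = - 1"
  "beta4 (Suc 0) 2 (Suc 0) 0 = 0"
  "beta4 (Suc 0) 2 (Suc 0) (Suc 0) = 0"
  "beta4 (Suc 0) 2 (Suc 0) 2 = 0"
  "beta4 (Suc 0) 2 (Suc 0) 3 = 0"
  "beta4 (Suc 0) 2 2 0 = 0"
  "beta4 (Suc 0) 2 2 (Suc 0) = 0"
  "beta4 (Suc 0) 2 2 2 = 0"
  "beta4 (Suc 0) 2 2 3 = 0"
  "beta4 (Suc 0) 2 3 0 = - 1"
  "beta4 (Suc 0) 2 3 (Suc 0) = 0"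
  "beta4 (Suc 0) 2 3 2 = 0"
  "beta4 (Suc 0) 2 3 3 = 0"
  "beta4 (Suc 0) 3 0 0 = 0"
  "beta4 (Suc 0) 3 0 (Suc 0) = 0"
  "beta4 (Suc 0) 3 0 2 = 0"
  "beta4 (Suc 0) 3 0 3 = 0"
  "beta4 (Suc 0) 3 (Suc 0) 0 = 0"
  "beta4 (Suc 0) 3 (Suc 0) (Suc 0) = 0"
  "beta4 (Suc 0) 3 (Suc 0) 2 = 0"
  "beta4 (Suc 0) 3 (Suc 0) 3 = - 1"
  "beta4 (Suc 0) 3 2 0 = 0"
  "beta4 (Suc 0) 3 2 (Suc 0) = 0"
  "beta4 (Suc 0) 3 2 2 = 0"
  "beta4 (Suc 0) 3 2 3 = 0"
  "beta4 (Suc 0) 3 3 0 = 0"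
  "beta4 (Suc 0) 3 3 (Suc 0) = - 1"
  "beta4 (Suc 0) 3 3 2 = 0"
  "beta4 (Suc 0) 3 3 3 = 0"
  "beta4 2 0 0 0 = 0"
  "beta4 2 0 0 (Suc 0) = 0"
  "beta4 2 0 0 2 = - 1"
  "beta4 2 0 0 3 = 0"
  "beta4 2 0 (Suc 0) 0 = 0"
  "beta4 2 0 (Suc 0) (Suc 0) = 0"
  "beta4 2 0 (Suc 0) 2 = 0"
  "beta4 2 0 (Suc 0) 3 = 0"
  "beta4 2 0 2 0 = - 1"
  "beta4 2 0 2 (Suc 0) = 0"
  "beta4 2 0 2 2 = 0"
  "beta4 2 0 2 3 = 0"
  "beta4 2 0 3 0 = 0"
  "beta4 2 0 3 (Suc 0) = 0"
  "beta4 2 0 3 2 = 0"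
  "beta4 2 0 3 3 = 0"
  "beta4 2 (Suc 0) 0 0 = 0"
  "beta4 2 (Suc 0) 0 (Suc 0) = 0"
  "beta4 2 (Suc 0) 0 2 = 0"
  "beta4 2 (Suc 0) 0 3 = - 1"
  "beta4 2 (Suc 0) (Suc 0) 0 = 0"
  "beta4 2 (Suc 0) (Suc 0) (Suc 0) = 0"
  "beta4 2 (Suc 0) (Suc 0) 2 = 0"
  "beta4 2 (Suc 0) (Suc 0) 3 = 0"
  "beta4 2 (Suc 0) 2 0 = 0"
  "beta4 2 (Suc 0) 2 (Suc 0) = 0"
  "beta4 2 (Suc 0) 2 2 = 0"
  "beta4 2 (Suc 0) 2 3 = 0"
  "beta4 2 (Suc 0) 3 0 = - 1"
  "beta4 2 (Suc 0) 3 (Suc 0) = 0"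
  "beta4 2 (Suc 0) 3 2 = 0"
  "beta4 2 (Suc 0) 3 3 = 0"
  "beta4 2 2 0 0 = 0"
  "beta4 2 2 0 (Suc 0) = 0"
  "beta4 2 2 0 2 = 0"
  "beta4 2 2 0 3 = 0"
  "beta4 2 2 (Suc 0) 0 = 0"
  "beta4 2 2 (Suc 0) (Suc 0) = 0"
  "beta4 2 2 (Suc 0) 2 = 0"
  "beta4 2 2 (Suc 0) 3 = 0"
  "beta4 2 2 2 0 = 0"
  "beta4 2 2 2 (Suc 0) = 0"
  "beta4 2 2 2 2 = 0"
  "beta4 2 2 2 3 = 0"
  "beta4 2 2 3 0 = 0"
  "beta4 2 2 3 (Suc 0) = 0"
  "beta4 2 2 3 2 = 0"
  "beta4 2 2 3 3 = 0"
  "beta4 2 3 0 0 = 0"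
  "beta4 2 3 0 (Suc 0) = 0"
  "beta4 2 3 0 2 = 0"
  "beta4 2 3 0 3 = 0"
  "beta4 2 3 (Suc 0) 0 = 0"
  "beta4 2 3 (Suc 0) (Suc 0) = 0"
  "beta4 2 3 (Suc 0) 2 = 0"
  "beta4 2 3 (Suc 0) 3 = 0"
  "beta4 2 3 2 0 = 0"
  "beta4 2 3 2 (Suc 0) = 0"
  "beta4 2 3 2 2 = 0"
  "beta4 2 3 2 3 = 0"
  "beta4 2 3 3 0 = 0"
  "beta4 2 3 3 (Suc 0) = 0"
  "beta4 2 3 3 2 = 0"
  "beta4 2 3 3 3 = 0"
  "beta4 3 0 0 0 = 0"
  "beta4 3 0 0 (Suc 0) = 0"
  "beta4 3 0 0 2 = 0"
  "beta4 3 0 0 3 = 0"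
  "beta4 3 0 (Suc 0) 0 = 0"
  "beta4 3 0 (Suc 0) (Suc 0) = 0"
  "beta4 3 0 (Suc 0) 2 = - 1"
  "beta4 3 0 (Suc 0) 3 = 0"
  "beta4 3 0 2 0 = 0"
  "beta4 3 0 2 (Suc 0) = - 1"
  "beta4 3 0 2 2 = 0"
  "beta4 3 0 2 3 = 0"
  "beta4 3 0 3 0 = 0"
  "beta4 3 0 3 (Suc 0) = 0"
  "beta4 3 0 3 2 = 0"
  "beta4 3 0 3 3 = 0"
  "beta4 3 (Suc 0) 0 0 = 0"
  "beta4 3 (Suc 0) 0 (Suc 0) = 0"
  "beta4 3 (Suc 0) 0 2 = 0"
  "beta4 3 (Suc 0) 0 3 = 0"
  "beta4 3 (Suc 0) (Suc 0) 0 = 0"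
  "beta4 3 (Suc 0) (Suc 0) (Suc 0) = 0"
  "beta4 3 (Suc 0) (Suc 0) 2 = 0"
  "beta4 3 (Suc 0) (Suc 0) 3 = - 1"
  "beta4 3 (Suc 0) 2 0 = 0"
  "beta4 3 (Suc 0) 2 (Suc 0) = 0"
  "beta4 3 (Suc 0) 2 2 = 0"
  "beta4 3 (Suc 0) 2 3 = 0"
  "beta4 3 (Suc 0) 3 0 = 0"
  "beta4 3 (Suc 0) 3 (Suc 0) = - 1"
  "beta4 3 (Suc 0) 3 2 = 0"
  "beta4 3 (Suc 0) 3 3 = 0"
  "beta4 3 2 0 0 = 0"
  "beta4 3 2 0 (Suc 0) = 0"
  "beta4 3 2 0 2 = 0"
  "beta4 3 2 0 3 = 0"
  "beta4 3 2 (Suc 0) 0 = 0"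
  "beta4 3 2 (Suc 0) (Suc 0) = 0"
  "beta4 3 2 (Suc 0) 2 = 0"
  "beta4 3 2 (Suc 0) 3 = 0"
  "beta4 3 2 2 0 = 0"
  "beta4 3 2 2 (Suc 0) = 0"
  "beta4 3 2 2 2 = 0"
  "beta4 3 2 2 3 = 0"
  "beta4 3 2 3 0 = 0"
  "beta4 3 2 3 (Suc 0) = 0"
  "beta4 3 2 3 2 = 0"
  "beta4 3 2 3 3 = 0"
  "beta4 3 3 0 0 = 0"
  "beta4 3 3 0 (Suc 0) = 0"
  "beta4 3 3 0 2 = 0"
  "beta4 3 3 0 3 = 0"
  "beta4 3 3 (Suc 0) 0 = 0"
  "beta4 3 3 (Suc 0) (Suc 0) = 0"
  "beta4 3 3 (Suc 0) 2 = 0"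
  "beta4 3 3 (Suc 0) 3 = 0"
  "beta4 3 3 2 0 = 0"
  "beta4 3 3 2 (Suc 0) = 0"
  "beta4 3 3 2 2 = 0"
  "beta4 3 3 2 3 = 0"
  "beta4 3 3 3 0 = 0"
  "beta4 3 3 3 (Suc 0) = 0"
  "beta4 3 3 3 2 = 0"
  "beta4 3 3 3 3 = 0"
  by (simp_all add: beta4_def sum4 eta_def gtab)

definition L16 :: "(nat \<times> nat \<times> nat \<times> nat) list" where
  "L16 = [(0,2,0,2), (0,2,2,0), (0,3,1,2), (0,3,2,1), (1,2,0,3), (1,2,3,0), (1,3,1,3), (1,3,3,1), (2,0,0,2), (2,0,2,0), (2,1,0,3), (2,1,3,0), (3,0,1,2), (3,0,2,1), (3,1,1,3), (3,1,3,1)]"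

definition P4 :: "(nat \<times> nat) list" where
  "P4 = [(0,2), (1,3), (2,0), (3,1)]"

lemma genT:
  "gen 0 = sem 0 (monoT 1 [True,False,False,False,False,False,False,False,False,False,False,False,False,False,False,False,False,False,False,False,False,False,False,False])"
  "gen 1 = sem 0 (monoT 1 [False,True,False,False,False,False,False,False,False,False,False,False,False,False,False,False,False,False,False,False,False,False,False,False])"
  "gen (Suc 0) = sem 0 (monoT 1 [False,True,False,False,False,False,False,False,False,False,False,False,False,False,False,False,False,False,False,False,False,False,False,False])"
  "gen 2 = sem 0 (monoT 1 [False,False,True,False,False,False,False,False,False,False,False,False,False,False,False,False,False,False,False,False,False,False,False,False])"
  "gen 3 = sem 0 (monoT 1 [False,False,False,True,False,False,False,False,False,False,False,False,False,False,False,False,False,False,False,False,False,False,False,False])"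
  "gen 4 = sem 0 (monoT 1 [False,False,False,False,True,False,False,False,False,False,False,False,False,False,False,False,False,False,False,False,False,False,False,False])"
  "gen 5 = sem 0 (monoT 1 [False,False,False,False,False,True,False,False,False,False,False,False,False,False,False,False,False,False,False,False,False,False,False,False])"
  "gen 6 = sem 0 (monoT 1 [False,False,False,False,False,False,True,False,False,False,False,False,False,False,False,False,False,False,False,False,False,False,False,False])"
  "gen 7 = sem 0 (monoT 1 [False,False,False,False,False,False,False,True,False,False,False,False,False,False,False,False,False,False,False,False,False,False,False,False])"
  "gen 8 = sem 0 (monoT 1 [False,False,False,False,False,False,False,False,True,False,False,False,False,False,False,False,False,False,False,False,False,False,False,False])"
  "gen 9 = sem 0 (monoT 1 [False,False,False,False,False,False,False,False,False,True,False,False,False,False,False,False,False,False,False,False,False,False,False,False])"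
  "gen 10 = sem 0 (monoT 1 [False,False,False,False,False,False,False,False,False,False,True,False,False,False,False,False,False,False,False,False,False,False,False,False])"
  "gen 11 = sem 0 (monoT 1 [False,False,False,False,False,False,False,False,False,False,False,True,False,False,False,False,False,False,False,False,False,False,False,False])"
  "gen 12 = sem 0 (monoT 1 [False,False,False,False,False,False,False,False,False,False,False,False,True,False,False,False,False,False,False,False,False,False,False,False])"
  "gen 13 = sem 0 (monoT 1 [False,False,False,False,False,False,False,False,False,False,False,False,False,True,False,False,False,False,False,False,False,False,False,False])"
  "gen 14 = sem 0 (monoT 1 [False,False,False,False,False,False,False,False,False,False,False,False,False,False,True,False,False,False,False,False,False,False,False,False])"
  "gen 15 = sem 0 (monoT 1 [False,False,False,False,False,False,False,False,False,False,False,False,False,False,False,True,False,False,False,False,False,False,False,False])"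
  "gen 16 = sem 0 (monoT 1 [False,False,False,False,False,False,False,False,False,False,False,False,False,False,False,False,True,False,False,False,False,False,False,False])"
  "gen 17 = sem 0 (monoT 1 [False,False,False,False,False,False,False,False,False,False,False,False,False,False,False,False,False,True,False,False,False,False,False,False])"
  "gen 18 = sem 0 (monoT 1 [False,False,False,False,False,False,False,False,False,False,False,False,False,False,False,False,False,False,True,False,False,False,False,False])"
  "gen 19 = sem 0 (monoT 1 [False,False,False,False,False,False,False,False,False,False,False,False,False,False,False,False,False,False,False,True,False,False,False,False])"
  "gen 20 = sem 0 (monoT 1 [False,False,False,False,False,False,False,False,False,False,False,False,False,False,False,False,False,False,False,False,True,False,False,False])"
  "gen 21 = sem 0 (monoT 1 [False,False,False,False,False,False,False,False,False,False,False,False,False,False,False,False,False,False,False,False,False,True,False,False])"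
  "gen 22 = sem 0 (monoT 1 [False,False,False,False,False,False,False,False,False,False,False,False,False,False,False,False,False,False,False,False,False,False,True,False])"
  "gen 23 = sem 0 (monoT 1 [False,False,False,False,False,False,False,False,False,False,False,False,False,False,False,False,False,False,False,False,False,False,False,True])"
  by (simp_all only: sem_monoT) (simp_all add: gen_ind gsmul_one numeral_eq_Suc)

definition "tJ00 = (N (N (N E (N (N (N (N (N (N (N (N (N (N (N (N E (N (N (N (N (N (N (N (N (N (L (- 1)) E) E) E) E) E) E) E) E) E)) E) E) E) E) E) E) E) E) E) E) E)) (N (N (N (N (N (N (N (N (N (N (N (N E (N (N (N (N (N (N (N (N (N (N (L (- 1)) E) E) E) E) E) E) E) E) E) E)) E) E) E) E) E) E) E) E) E) E) E)) (N (N (N (N (N (N (N (N (N (N (N (N E (N (N (N (N (N (N (N (N (N (N (N (L (- 1)) E) E) E) E) E) E) E) E) E) E) E)) E) E) E) E) E) E) E) E) E) E) E))"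
definition "tJ01 = (N (N (N (N (N (N E (N (N (N (N (N (N (N (N (N E (N (N (N (N (N (N (N (N (N (L (- 1)) E) E) E) E) E) E) E) E) E)) E) E) E) E) E) E) E) E)) (N (N (N (N (N (N (N (N (N E (N (N (N (N (N (N (N (N (N (N (L (- 1)) E) E) E) E) E) E) E) E) E) E)) E) E) E) E) E) E) E) E)) (N (N (N (N (N (N (N (N (N E (N (N (N (N (N (N (N (N (N (N (N (L (- 1)) E) E) E) E) E) E) E) E) E) E) E)) E) E) E) E) E) E) E) E)) E) E) E)"
definition "tJ02 = (N (N (N (N (N (N (N (N (N E (N (N (N (N (N (N E (N (N (N (N (N (N (N (N (N (L (- 1)) E) E) E) E) E) E) E) E) E)) E) E) E) E) E)) (N (N (N (N (N (N E (N (N (N (N (N (N (N (N (N (N (L (- 1)) E) E) E) E) E) E) E) E) E) E)) E) E) E) E) E)) (N (N (N (N (N (N E (N (N (N (N (N (N (N (N (N (N (N (L (- 1)) E) E) E) E) E) E) E) E) E) E) E)) E) E) E) E) E)) E) E) E) E) E) E)"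
definition "tJ03 = (N (N (N (N (N (N (N (N (N (N (N (N E (N (N (N E (N (N (N (N (N (N (N (N (N (L (- 1)) E) E) E) E) E) E) E) E) E)) E) E)) (N (N (N E (N (N (N (N (N (N (N (N (N (N (L (- 1)) E) E) E) E) E) E) E) E) E) E)) E) E)) (N (N (N E (N (N (N (N (N (N (N (N (N (N (N (L (- 1)) E) E) E) E) E) E) E) E) E) E) E)) E) E)) E) E) E) E) E) E) E) E) E)"
definition "tJ10 = (N (N (N E (N (N (N (N (N (N (N (N (N (N (N (N (N (N (N E (N (N (N (N (N (N (L (- 1)) E) E) E) E) E) E)) E) E) E) E) E) E) E) E) E) E) E) E) E) E)) (N (N (N (N (N (N (N (N (N (N (N (N (N (N (N E (N (N (N (N (N (N (N (L (- 1)) E) E) E) E) E) E) E)) E) E) E) E) E) E) E) E) E) E) E) E) E) E)) (N (N (N (N (N (N (N (N (N (N (N (N (N (N (N E (N (N (N (N (N (N (N (N (L (- 1)) E) E) E) E) E) E) E) E)) E) E) E) E) E) E) E) E) E) E) E) E) E) E))"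
definition "tJ11 = (N (N (N (N (N (N E (N (N (N (N (N (N (N (N (N (N (N (N E (N (N (N (N (N (N (L (- 1)) E) E) E) E) E) E)) E) E) E) E) E) E) E) E) E) E) E)) (N (N (N (N (N (N (N (N (N (N (N (N E (N (N (N (N (N (N (N (L (- 1)) E) E) E) E) E) E) E)) E) E) E) E) E) E) E) E) E) E) E)) (N (N (N (N (N (N (N (N (N (N (N (N E (N (N (N (N (N (N (N (N (L (- 1)) E) E) E) E) E) E) E) E)) E) E) E) E) E) E) E) E) E) E) E)) E) E) E)"
definition "tJ12 = (N (N (N (N (N (N (N (N (N E (N (N (N (N (N (N (N (N (N E (N (N (N (N (N (N (L (- 1)) E) E) E) E) E) E)) E) E) E) E) E) E) E) E)) (N (N (N (N (N (N (N (N (N E (N (N (N (N (N (N (N (L (- 1)) E) E) E) E) E) E) E)) E) E) E) E) E) E) E) E)) (N (N (N (N (N (N (N (N (N E (N (N (N (N (N (N (N (N (L (- 1)) E) E) E) E) E) E) E) E)) E) E) E) E) E) E) E) E)) E) E) E) E) E) E)"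
definition "tJ13 = (N (N (N (N (N (N (N (N (N (N (N (N E (N (N (N (N (N (N E (N (N (N (N (N (N (L (- 1)) E) E) E) E) E) E)) E) E) E) E) E)) (N (N (N (N (N (N E (N (N (N (N (N (N (N (L (- 1)) E) E) E) E) E) E) E)) E) E) E) E) E)) (N (N (N (N (N (N E (N (N (N (N (N (N (N (N (L (- 1)) E) E) E) E) E) E) E) E)) E) E) E) E) E)) E) E) E) E) E) E) E) E) E)"
definition "tJ20 = (N (N (N E (N (N (N (N (N (N (N (N (N (N (N (N (N (N (N (N (N (N E (N (N (N (L (- 1)) E) E) E)) E) E) E) E) E) E) E) E) E) E) E) E) E) E) E) E) E)) (N (N (N (N (N (N (N (N (N (N (N (N (N (N (N (N (N (N E (N (N (N (N (L (- 1)) E) E) E) E)) E) E) E) E) E) E) E) E) E) E) E) E) E) E) E) E) E)) (N (N (N (N (N (N (N (N (N (N (N (N (N (N (N (N (N (N E (N (N (N (N (N (L (- 1)) E) E) E) E) E)) E) E) E) E) E) E) E) E) E) E) E) E) E) E) E) E) E))"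
definition "tJ21 = (N (N (N (N (N (N E (N (N (N (N (N (N (N (N (N (N (N (N (N (N (N E (N (N (N (L (- 1)) E) E) E)) E) E) E) E) E) E) E) E) E) E) E) E) E) E)) (N (N (N (N (N (N (N (N (N (N (N (N (N (N (N E (N (N (N (N (L (- 1)) E) E) E) E)) E) E) E) E) E) E) E) E) E) E) E) E) E) E)) (N (N (N (N (N (N (N (N (N (N (N (N (N (N (N E (N (N (N (N (N (L (- 1)) E) E) E) E) E)) E) E) E) E) E) E) E) E) E) E) E) E) E) E)) E) E) E)"
definition "tJ22 = (N (N (N (N (N (N (N (N (N E (N (N (N (N (N (N (N (N (N (N (N (N E (N (N (N (L (- 1)) E) E) E)) E) E) E) E) E) E) E) E) E) E) E)) (N (N (N (N (N (N (N (N (N (N (N (N E (N (N (N (N (L (- 1)) E) E) E) E)) E) E) E) E) E) E) E) E) E) E) E)) (N (N (N (N (N (N (N (N (N (N (N (N E (N (N (N (N (N (L (- 1)) E) E) E) E) E)) E) E) E) E) E) E) E) E) E) E) E)) E) E) E) E) E) E)"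
definition "tJ23 = (N (N (N (N (N (N (N (N (N (N (N (N E (N (N (N (N (N (N (N (N (N E (N (N (N (L (- 1)) E) E) E)) E) E) E) E) E) E) E) E)) (N (N (N (N (N (N (N (N (N E (N (N (N (N (L (- 1)) E) E) E) E)) E) E) E) E) E) E) E) E)) (N (N (N (N (N (N (N (N (N E (N (N (N (N (N (L (- 1)) E) E) E) E) E)) E) E) E) E) E) E) E) E)) E) E) E) E) E) E) E) E) E)"
definition "tJ30 = (N (N (N E (N (N (N (N (N (N (N (N (N (N (N (N (N (N (N (N (N (N (N (N (N E (L (- 1))) E) E) E) E) E) E) E) E) E) E) E) E) E) E) E) E) E) E) E) E)) (N (N (N (N (N (N (N (N (N (N (N (N (N (N (N (N (N (N (N (N (N E (N (L (- 1)) E)) E) E) E) E) E) E) E) E) E) E) E) E) E) E) E) E) E) E) E) E)) (N (N (N (N (N (N (N (N (N (N (N (N (N (N (N (N (N (N (N (N (N E (N (N (L (- 1)) E) E)) E) E) E) E) E) E) E) E) E) E) E) E) E) E) E) E) E) E) E) E))"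
definition "tJ31 = (N (N (N (N (N (N E (N (N (N (N (N (N (N (N (N (N (N (N (N (N (N (N (N (N E (L (- 1))) E) E) E) E) E) E) E) E) E) E) E) E) E) E) E) E) E)) (N (N (N (N (N (N (N (N (N (N (N (N (N (N (N (N (N (N E (N (L (- 1)) E)) E) E) E) E) E) E) E) E) E) E) E) E) E) E) E) E) E)) (N (N (N (N (N (N (N (N (N (N (N (N (N (N (N (N (N (N E (N (N (L (- 1)) E) E)) E) E) E) E) E) E) E) E) E) E) E) E) E) E) E) E) E)) E) E) E)"
definition "tJ32 = (N (N (N (N (N (N (N (N (N E (N (N (N (N (N (N (N (N (N (N (N (N (N (N (N E (L (- 1))) E) E) E) E) E) E) E) E) E) E) E) E) E) E)) (N (N (N (N (N (N (N (N (N (N (N (N (N (N (N E (N (L (- 1)) E)) E) E) E) E) E) E) E) E) E) E) E) E) E) E)) (N (N (N (N (N (N (N (N (N (N (N (N (N (N (N E (N (N (L (- 1)) E) E)) E) E) E) E) E) E) E) E) E) E) E) E) E) E)) E) E) E) E) E) E)"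
definition "tJ33 = (N (N (N (N (N (N (N (N (N (N (N (N E (N (N (N (N (N (N (N (N (N (N (N (N E (L (- 1))) E) E) E) E) E) E) E) E) E) E) E)) (N (N (N (N (N (N (N (N (N (N (N (N E (N (L (- 1)) E)) E) E) E) E) E) E) E) E) E) E) E)) (N (N (N (N (N (N (N (N (N (N (N (N E (N (N (L (- 1)) E) E)) E) E) E) E) E) E) E) E) E) E) E)) E) E) E) E) E) E) E) E) E)"
lemma gsum3: "gsum f {..<(3::nat)} = gadd (f 0) (gadd (f 1) (f 2))"
  by (simp add: gsum_def gadd_def fun_eq_iff eval_nat_numeral lessThan_Suc add.commute add.left_commute)

lemma Jtr00: "Jc 0 0 = sem 0 tJ00"
  apply (simp add: Jc_def psi_def psibar_def gsum3 genT sem_mul sem_add del: sem.simps)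
  apply (rule sem_eqI)
  apply (simp add: tJ00_def)
  done

lemma Jtr01: "Jc 0 (Suc 0) = sem 0 tJ01"
  apply (simp add: Jc_def psi_def psibar_def gsum3 genT sem_mul sem_add del: sem.simps)
  apply (rule sem_eqI)
  apply (simp add: tJ01_def)
  done

lemma Jtr02: "Jc 0 2 = sem 0 tJ02"
  apply (simp add: Jc_def psi_def psibar_def gsum3 genT sem_mul sem_add del: sem.simps)
  apply (rule sem_eqI)
  apply (simp add: tJ02_def)
  done

lemma Jtr03: "Jc 0 3 = sem 0 tJ03"
  apply (simp add: Jc_def psi_def psibar_def gsum3 genT sem_mul sem_add del: sem.simps)
  apply (rule sem_eqI)
  apply (simp add: tJ03_def)
  done

lemma Jtr10: "Jc (Suc 0) 0 = sem 0 tJ10"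
  apply (simp add: Jc_def psi_def psibar_def gsum3 genT sem_mul sem_add del: sem.simps)
  apply (rule sem_eqI)
  apply (simp add: tJ10_def)
  done

lemma Jtr11: "Jc (Suc 0) (Suc 0) = sem 0 tJ11"
  apply (simp add: Jc_def psi_def psibar_def gsum3 genT sem_mul sem_add del: sem.simps)
  apply (rule sem_eqI)
  apply (simp add: tJ11_def)
  done

lemma Jtr12: "Jc (Suc 0) 2 = sem 0 tJ12"
  apply (simp add: Jc_def psi_def psibar_def gsum3 genT sem_mul sem_add del: sem.simps)
  apply (rule sem_eqI)
  apply (simp add: tJ12_def)
  done

lemma Jtr13: "Jc (Suc 0) 3 = sem 0 tJ13"
  apply (simp add: Jc_def psi_def psibar_def gsum3 genT sem_mul sem_add del: sem.simps)
  apply (rule sem_eqI)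
  apply (simp add: tJ13_def)
  done

lemma Jtr20: "Jc 2 0 = sem 0 tJ20"
  apply (simp add: Jc_def psi_def psibar_def gsum3 genT sem_mul sem_add del: sem.simps)
  apply (rule sem_eqI)
  apply (simp add: tJ20_def)
  done

lemma Jtr21: "Jc 2 (Suc 0) = sem 0 tJ21"
  apply (simp add: Jc_def psi_def psibar_def gsum3 genT sem_mul sem_add del: sem.simps)
  apply (rule sem_eqI)
  apply (simp add: tJ21_def)
  done

lemma Jtr22: "Jc 2 2 = sem 0 tJ22"
  apply (simp add: Jc_def psi_def psibar_def gsum3 genT sem_mul sem_add del: sem.simps)
  apply (rule sem_eqI)
  apply (simp add: tJ22_def)
  done

lemma Jtr23: "Jc 2 3 = sem 0 tJ23"
  apply (simp add: Jc_def psi_def psibar_def gsum3 genT sem_mul sem_add del: sem.simps)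
  apply (rule sem_eqI)
  apply (simp add: tJ23_def)
  done

lemma Jtr30: "Jc 3 0 = sem 0 tJ30"
  apply (simp add: Jc_def psi_def psibar_def gsum3 genT sem_mul sem_add del: sem.simps)
  apply (rule sem_eqI)
  apply (simp add: tJ30_def)
  done

lemma Jtr31: "Jc 3 (Suc 0) = sem 0 tJ31"
  apply (simp add: Jc_def psi_def psibar_def gsum3 genT sem_mul sem_add del: sem.simps)
  apply (rule sem_eqI)
  apply (simp add: tJ31_def)
  done

lemma Jtr32: "Jc 3 2 = sem 0 tJ32"
  apply (simp add: Jc_def psi_def psibar_def gsum3 genT sem_mul sem_add del: sem.simps)
  apply (rule sem_eqI)
  apply (simp add: tJ32_def)
  done

lemma Jtr33: "Jc 3 3 = sem 0 tJ33"
  apply (simp add: Jc_def psi_def psibar_def gsum3 genT sem_mul sem_add del: sem.simps)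
  apply (rule sem_eqI)
  apply (simp add: tJ33_def)
  done

lemmas Jtr = Jtr00 Jtr01 Jtr02 Jtr03 Jtr10 Jtr11 Jtr12 Jtr13 Jtr20 Jtr21 Jtr22 Jtr23 Jtr30 Jtr31 Jtr32 Jtr33

definition "tX = (N (N (N (N (N (N E (N (N (N (N E (N E (N (N (N (N (N (N E (N E (N (N (N (N E (N (N (L (- 32)) E) E)) E) E) E))) (N (N E (N (N (N (N (N E (N (L (32)) E)) E) E) E) E)) (N (N (N (N (N (N (N E (L (- 32))) E) E) E) E) E) E))) E) E) E) E))) E) (N (N E (N (N (N (N (N E (N (N E (N (N (N (N (N E (N (N (L (- 16)) E) E)) E) E) E) E)) (N (N (N (N (N (N (N E (N (L (16)) E)) E) E) E) E) E) E))) (N (N (N (N E (N (N (N (N E (N (N (L (16)) E) E)) E) E) E)) E) (N (N (N (N (N (N (N (N E (L (- 16))) E) E) E) E) E) E) E)) E)) (N (N (N (N (N E (N (N (N (N (N E (N (L (- 16)) E)) E) E) E) E)) (N (N (N (N (N (N (N E (L (16))) E) E) E) E) E) E)) E) E) E)) E) E)) E)) (N (N (N (N E (N (N (N (N E (N (N E (N (N (N (N (N E (N (N (L (16)) E) E)) E) E) E) E)) (N (N (N (N (N (N (N E (N (L (- 16)) E)) E) E) E) E) E) E))) (N (N (N (N E (N (N (N (N E (N (N (L (- 16)) E) E)) E) E) E)) E) (N (N (N (N (N (N (N (N E (L (16))) E) E) E) E) E) E) E)) E)) (N (N (N (N (N E (N (N (N (N (N E (N (L (16)) E)) E) E) E)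 E)) (N (N (N (N (N (N (N E (L (- 16))) E) E) E) E) E) E)) E) E) E)) E)) E) E) (N (N (N (N (N (N E (N E (N (N (N (N (N (N (N E (N (N (L (- 32)) E) E)) E) E) E) E) E) E))) (N (N E (N (N (N (N (N (N (N (N E (N (L (32)) E)) E) E) E) E) E) E) E)) (N (N (N (N (N (N (N (N (N (N E (L (- 32))) E) E) E) E) E) E) E) E) E))) E) E) E) E)))) (N (N (N (N (N E (N (N E (N (N (N (N (N E (N E (N (N (N (N E (N (N (L (32)) E) E)) E) E) E))) (N (N E (N (N (N (N (N E (N (L (- 32)) E)) E) E) E) E)) (N (N (N (N (N (N (N E (L (32))) E) E) E) E) E) E))) E) E) E)) E)) (N E (N (N (N (N (N E (N (N E (N (N (N (N (N E (N (N (L (16)) E) E)) E) E) E) E)) (N (N (N (N (N (N (N E (N (L (- 16)) E)) E) E) E) E) E) E))) (N (N (N (N E (N (N (N (N E (N (N (L (- 16)) E) E)) E) E) E)) E) (N (N (N (N (N (N (N (N E (L (16))) E) E) E) E) E) E) E)) E)) (N (N (N (N (N E (N (N (N (N (N E (N (L (16)) E)) E) E) E) E)) (N (N (N (N (N (N (N E (L (- 16))) E) E) E) E) E) E)) E) E) E)) E) E))) E) (N (N (N (N (N E (N (N (N E (N (N E (N (N (N (N (N E (N (N (L (- 16)) E) E)) E) E) E) E)) (N (N (N (N (N (N (N E (N (L (16)) E)) E) E) E) E) E) E))) (N (N (N (N E (N (N (N (N E (N (N (L (16)) E) E)) E) E) E)) E) (N (N (N (N (N (N (N (N E (L (- 16)))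 E) E) E) E) E) E) E)) E)) (N (N (N (N (N E (N (N (N (N (N E (N (L (- 16)) E)) E) E) E) E)) (N (N (N (N (N (N (N E (L (16))) E) E) E) E) E) E)) E) E) E))) E) E) (N (N (N (N (N E (N E (N (N (N (N (N (N (N E (N (N (L (32)) E) E)) E) E) E) E) E) E))) (N (N E (N (N (N (N (N (N (N (N E (N (L (- 32)) E)) E) E) E) E) E) E) E)) (N (N (N (N (N (N (N (N (N (N E (L (32))) E) E) E) E) E) E) E) E) E))) E) E) E)) E)) (N (N (N (N E (N (N (N (N (N (N (N (N E (N (N (N (N E (N E (N (L (- 32)) E))) E) E) E)) (N (N (N (N (N E (N (N E (L (32))) E)) E) E) E) E)) (N (N (N (N (N (N (N E (N E (L (- 32)))) E) E) E) E) E) E)) E) E) E) E) E)) E) E) (N (N (N (N (N (N (N (N E (N (N (N (N (N (N (N E (N E (N (L (- 32)) E))) E) E) E) E) E) E)) (N (N (N (N (N (N (N (N E (N (N E (L (32))) E)) E) E) E) E) E) E) E)) (N (N (N (N (N (N (N (N (N (N E (N E (L (- 32)))) E) E) E) E) E) E) E) E) E)) E) E) E) E) E)))) (N (N (N (N (N (N (N E (N E (N (N (N (N (N E (N E (N (N (N (N E (N (N (L (- 32)) E) E)) E) E) E))) (N (N E (N (N (N (N (N E (N (L (32)) E)) E) E) E) E)) (N (N (N (N (N (N (N E (L (- 32))) E) E) E) E) E) E))) E) E) E))) E) (N (N E (N (N (N (N E (N (N E (N (N (N (N (N E (N (N (L (- 16)) E) E)) E) E) E) E)) (N (N (N (N (N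 (N (N E (N (L (16)) E)) E) E) E) E) E) E))) (N (N (N (N E (N (N (N (N E (N (N (L (16)) E) E)) E) E) E)) E) (N (N (N (N (N (N (N (N E (L (- 16))) E) E) E) E) E) E) E)) E)) (N (N (N (N (N E (N (N (N (N (N E (N (L (- 16)) E)) E) E) E) E)) (N (N (N (N (N (N (N E (L (16))) E) E) E) E) E) E)) E) E) E)) E)) E)) (N (N (N (N E (N (N (N E (N (N E (N (N (N (N (N E (N (N (L (16)) E) E)) E) E) E) E)) (N (N (N (N (N (N (N E (N (L (- 16)) E)) E) E) E) E) E) E))) (N (N (N (N E (N (N (N (N E (N (N (L (- 16)) E) E)) E) E) E)) E) (N (N (N (N (N (N (N (N E (L (16))) E) E) E) E) E) E) E)) E)) (N (N (N (N (N E (N (N (N (N (N E (N (L (16)) E)) E) E) E) E)) (N (N (N (N (N (N (N E (L (- 16))) E) E) E) E) E) E)) E) E) E))) E) E) (N (N (N (N (N E (N E (N (N (N (N (N (N (N E (N (N (L (- 32)) E) E)) E) E) E) E) E) E))) (N (N E (N (N (N (N (N (N (N (N E (N (L (32)) E)) E) E) E) E) E) E) E)) (N (N (N (N (N (N (N (N (N (N E (L (- 32))) E) E) E) E) E) E) E) E) E))) E) E) E))) E) (N (N (N (N (N E (N (N (N (N (N (N (N E (N (N (N (N E (N E (N (L (32)) E))) E) E) E)) (N (N (N (N (N E (N (N E (L (- 32))) E)) E) E) E) E)) (N (N (N (N (N (N (N E (N E (L (32)))) E) E) E) E) E) E)) E) E) E) E)) E) E) (N (N (N (N (N (N (N E (N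 (N (N (N (N (N (N E (N E (N (L (32)) E))) E) E) E) E) E) E)) (N (N (N (N (N (N (N (N E (N (N E (L (- 32))) E)) E) E) E) E) E) E) E)) (N (N (N (N (N (N (N (N (N (N E (N E (L (32)))) E) E) E) E) E) E) E) E) E)) E) E) E) E)) E)) (N (N (N (N (N (N (N E (N (N (N (N (N (N E (N (N (N (N E (N E (N (L (- 32)) E))) E) E) E)) (N (N (N (N (N E (N (N E (L (32))) E)) E) E) E) E)) (N (N (N (N (N (N (N E (N E (L (- 32)))) E) E) E) E) E) E)) E) E) E)) E) E) (N (N (N (N (N (N E (N (N (N (N (N (N (N E (N E (N (L (- 32)) E))) E) E) E) E) E) E)) (N (N (N (N (N (N (N (N E (N (N E (L (32))) E)) E) E) E) E) E) E) E)) (N (N (N (N (N (N (N (N (N (N E (N E (L (- 32)))) E) E) E) E) E) E) E) E) E)) E) E) E)) E) E) E))) (N (N (N (N (N (N (N E (N E (N (N (N (N (N (N E (N E (N E (N (N (N (N (N (L (- 32)) E) E) E) E) E)))) (N (N E (N (N E (N (N (N (N (L (32)) E) E) E) E)) E)) (N (N (N (N E (N (N (N (L (- 32)) E) E) E)) E) E) E))) E) E) E) E))) E) (N (N E (N (N (N (N (N E (N (N E (N (N E (N (N (N (N (N (L (- 16)) E) E) E) E) E)) E)) (N (N (N (N E (N (N (N (N (L (16)) E) E) E) E)) E) E) E))) (N (N (N (N E (N E (N (N (N (N (N (L (16)) E) E) E) E) E))) E) (N (N (N (N (N E (N (N (N (L (- 16)) E) E) E)) E) E) E) E)) E)) (N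 (N (N (N (N E (N (N E (N (N (N (N (L (- 16)) E) E) E) E)) E)) (N (N (N (N E (N (N (N (L (16)) E) E) E)) E) E) E)) E) E) E)) E) E)) E)) (N (N (N (N E (N (N (N (N E (N (N E (N (N E (N (N (N (N (N (L (16)) E) E) E) E) E)) E)) (N (N (N (N E (N (N (N (N (L (- 16)) E) E) E) E)) E) E) E))) (N (N (N (N E (N E (N (N (N (N (N (L (- 16)) E) E) E) E) E))) E) (N (N (N (N (N E (N (N (N (L (16)) E) E) E)) E) E) E) E)) E)) (N (N (N (N (N E (N (N E (N (N (N (N (L (16)) E) E) E) E)) E)) (N (N (N (N E (N (N (N (L (- 16)) E) E) E)) E) E) E)) E) E) E)) E)) E) E) (N (N (N (N (N (N E (N E (N (N (N (N E (N (N (N (N (N (L (- 32)) E) E) E) E) E)) E) E) E))) (N (N E (N (N (N (N (N E (N (N (N (N (L (32)) E) E) E) E)) E) E) E) E)) (N (N (N (N (N (N (N E (N (N (N (L (- 32)) E) E) E)) E) E) E) E) E) E))) E) E) E) E))) E) (N (N (N (N (N E (N (N (N (N (N (N (N (N E (N (N E (N (N E (N (N (L (- 16)) E) E)) E)) (N (N (N (N E (N (L (16)) E)) E) E) E))) (N (N (N (N E (N E (N (N (L (16)) E) E))) E) (N (N (N (N (N E (L (- 16))) E) E) E) E)) E)) (N (N (N (N (N E (N (N E (N (L (- 16)) E)) E)) (N (N (N (N E (L (16))) E) E) E)) E) E) E)) E) E) E) E) E)) E) E) (N (N (N (N (N (N (N (N E (N (N (N (N (N E (N (N E (N (N (L (-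 16)) E) E)) E)) (N (N (N (N E (N (L (16)) E)) E) E) E)) E) E) E)) (N (N (N (N (N (N (N E (N E (N (N (L (16)) E) E))) E) (N (N (N (N (N E (L (- 16))) E) E) E) E)) E) E) E) E)) (N (N (N (N (N (N (N (N E (N (N E (N (L (- 16)) E)) E)) (N (N (N (N E (L (16))) E) E) E)) E) E) E) E) E) E)) E) E) E) E) E)) E)) (N (N (N (N (N (N (N E (N (N (N (N (N (N (N E (N (N E (N (N E (N (N (L (16)) E) E)) E)) (N (N (N (N E (N (L (- 16)) E)) E) E) E))) (N (N (N (N E (N E (N (N (L (- 16)) E) E))) E) (N (N (N (N (N E (L (16))) E) E) E) E)) E)) (N (N (N (N (N E (N (N E (N (L (16)) E)) E)) (N (N (N (N E (L (- 16))) E) E) E)) E) E) E)) E) E) E) E)) E) E) (N (N (N (N (N (N (N E (N (N (N (N (N E (N (N E (N (N (L (16)) E) E)) E)) (N (N (N (N E (N (L (- 16)) E)) E) E) E)) E) E) E)) (N (N (N (N (N (N (N E (N E (N (N (L (- 16)) E) E))) E) (N (N (N (N (N E (L (16))) E) E) E) E)) E) E) E) E)) (N (N (N (N (N (N (N (N E (N (N E (N (L (16)) E)) E)) (N (N (N (N E (L (- 16))) E) E) E)) E) E) E) E) E) E)) E) E) E) E)) E) E) E))) (N (N (N (N (N (N (N (N E (N (N E (N (N (N (N (N E (N E (N E (N (N (N (N (N (L (32)) E) E) E) E) E)))) (N (N E (N (N E (N (N (N (N (L (- 32)) E) E) E) E)) E)) (N (N (N (N E (N (N (N (L (32)) E)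 E) E)) E) E) E))) E) E) E)) E)) (N E (N (N (N (N (N E (N (N E (N (N E (N (N (N (N (N (L (16)) E) E) E) E) E)) E)) (N (N (N (N E (N (N (N (N (L (- 16)) E) E) E) E)) E) E) E))) (N (N (N (N E (N E (N (N (N (N (N (L (- 16)) E) E) E) E) E))) E) (N (N (N (N (N E (N (N (N (L (16)) E) E) E)) E) E) E) E)) E)) (N (N (N (N (N E (N (N E (N (N (N (N (L (16)) E) E) E) E)) E)) (N (N (N (N E (N (N (N (L (- 16)) E) E) E)) E) E) E)) E) E) E)) E) E))) E) (N (N (N (N (N E (N (N (N E (N (N E (N (N E (N (N (N (N (N (L (- 16)) E) E) E) E) E)) E)) (N (N (N (N E (N (N (N (N (L (16)) E) E) E) E)) E) E) E))) (N (N (N (N E (N E (N (N (N (N (N (L (16)) E) E) E) E) E))) E) (N (N (N (N (N E (N (N (N (L (- 16)) E) E) E)) E) E) E) E)) E)) (N (N (N (N (N E (N (N E (N (N (N (N (L (- 16)) E) E) E) E)) E)) (N (N (N (N E (N (N (N (L (16)) E) E) E)) E) E) E)) E) E) E))) E) E) (N (N (N (N (N E (N E (N (N (N (N E (N (N (N (N (N (L (32)) E) E) E) E) E)) E) E) E))) (N (N E (N (N (N (N (N E (N (N (N (N (L (- 32)) E) E) E) E)) E) E) E) E)) (N (N (N (N (N (N (N E (N (N (N (L (32)) E) E) E)) E) E) E) E) E) E))) E) E) E)) E)) (N (N (N (N E (N (N (N (N (N (N (N (N E (N (N E (N (N E (N (N (L (16)) E) E)) E)) (N (N (N (N E (N (L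 (- 16)) E)) E) E) E))) (N (N (N (N E (N E (N (N (L (- 16)) E) E))) E) (N (N (N (N (N E (L (16))) E) E) E) E)) E)) (N (N (N (N (N E (N (N E (N (L (16)) E)) E)) (N (N (N (N E (L (- 16))) E) E) E)) E) E) E)) E) E) E) E) E)) E) E) (N (N (N (N (N (N (N (N E (N (N (N (N (N E (N (N E (N (N (L (16)) E) E)) E)) (N (N (N (N E (N (L (- 16)) E)) E) E) E)) E) E) E)) (N (N (N (N (N (N (N E (N E (N (N (L (- 16)) E) E))) E) (N (N (N (N (N E (L (16))) E) E) E) E)) E) E) E) E)) (N (N (N (N (N (N (N (N E (N (N E (N (L (16)) E)) E)) (N (N (N (N E (L (- 16))) E) E) E)) E) E) E) E) E) E)) E) E) E) E) E))) E) (N (N (N (N (N (N (N (N E (N (N (N (N (N (N E (N (N E (N (N E (N (N (L (- 16)) E) E)) E)) (N (N (N (N E (N (L (16)) E)) E) E) E))) (N (N (N (N E (N E (N (N (L (16)) E) E))) E) (N (N (N (N (N E (L (- 16))) E) E) E) E)) E)) (N (N (N (N (N E (N (N E (N (L (- 16)) E)) E)) (N (N (N (N E (L (16))) E) E) E)) E) E) E)) E) E) E)) E) E) (N (N (N (N (N (N E (N (N (N (N (N E (N (N E (N (N (L (- 16)) E) E)) E)) (N (N (N (N E (N (L (16)) E)) E) E) E)) E) E) E)) (N (N (N (N (N (N (N E (N E (N (N (L (16)) E) E))) E) (N (N (N (N (N E (L (- 16))) E) E) E) E)) E) E) E) E)) (N (N (N (N (N (N (N (N E (N (N E (N (L (-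 16)) E)) E)) (N (N (N (N E (L (16))) E) E) E)) E) E) E) E) E) E)) E) E) E)) E) E) E) E)) (N (N (N (N (N (N (N E (N (N (N (N (N (N (N (N E (N E (N E (N (N (N (N (L (- 32)) E) E) E) E)))) (N (N E (N (N E (N (N (N (L (32)) E) E) E)) E)) E)) (N (N (N (N E (N E (N (N (N (L (- 32)) E) E) E))) E) E) E)) E) E) E) E) E)) E) E) (N (N (N (N (N (N (N (N E (N (N (N (N E (N E (N (N (N (N (L (- 32)) E) E) E) E))) E) E) E)) (N (N (N (N (N E (N (N E (N (N (N (L (32)) E) E) E)) E)) E) E) E) E)) (N (N (N (N (N (N (N E (N E (N (N (N (L (- 32)) E) E) E))) E) E) E) E) E) E)) E) E) E) E) E)) E) E) E))) (N (N (N (N (N (N (N (N (N (N E (N E (N (N (N (N (N E (N E (N E (N (N (N (N (N (L (- 32)) E) E) E) E) E)))) (N (N E (N (N E (N (N (N (N (L (32)) E) E) E) E)) E)) (N (N (N (N E (N (N (N (L (- 32)) E) E) E)) E) E) E))) E) E) E))) E) (N (N E (N (N (N (N E (N (N E (N (N E (N (N (N (N (N (L (- 16)) E) E) E) E) E)) E)) (N (N (N (N E (N (N (N (N (L (16)) E) E) E) E)) E) E) E))) (N (N (N (N E (N E (N (N (N (N (N (L (16)) E) E) E) E) E))) E) (N (N (N (N (N E (N (N (N (L (- 16)) E) E) E)) E) E) E) E)) E)) (N (N (N (N (N E (N (N E (N (N (N (N (L (- 16)) E) E) E) E)) E)) (N (N (N (N E (N (N (N (L (16)) E) E) E)) E)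 E) E)) E) E) E)) E)) E)) (N (N (N (N E (N (N (N E (N (N E (N (N E (N (N (N (N (N (L (16)) E) E) E) E) E)) E)) (N (N (N (N E (N (N (N (N (L (- 16)) E) E) E) E)) E) E) E))) (N (N (N (N E (N E (N (N (N (N (N (L (- 16)) E) E) E) E) E))) E) (N (N (N (N (N E (N (N (N (L (16)) E) E) E)) E) E) E) E)) E)) (N (N (N (N (N E (N (N E (N (N (N (N (L (16)) E) E) E) E)) E)) (N (N (N (N E (N (N (N (L (- 16)) E) E) E)) E) E) E)) E) E) E))) E) E) (N (N (N (N (N E (N E (N (N (N (N E (N (N (N (N (N (L (- 32)) E) E) E) E) E)) E) E) E))) (N (N E (N (N (N (N (N E (N (N (N (N (L (32)) E) E) E) E)) E) E) E) E)) (N (N (N (N (N (N (N E (N (N (N (L (- 32)) E) E) E)) E) E) E) E) E) E))) E) E) E))) E) (N (N (N (N (N E (N (N (N (N (N (N (N E (N (N E (N (N E (N (N (L (- 16)) E) E)) E)) (N (N (N (N E (N (L (16)) E)) E) E) E))) (N (N (N (N E (N E (N (N (L (16)) E) E))) E) (N (N (N (N (N E (L (- 16))) E) E) E) E)) E)) (N (N (N (N (N E (N (N E (N (L (- 16)) E)) E)) (N (N (N (N E (L (16))) E) E) E)) E) E) E)) E) E) E) E)) E) E) (N (N (N (N (N (N (N E (N (N (N (N (N E (N (N E (N (N (L (- 16)) E) E)) E)) (N (N (N (N E (N (L (16)) E)) E) E) E)) E) E) E)) (N (N (N (N (N (N (N E (N E (N (N (L (16)) E) E))) E) (N (N (N (N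 (N E (L (- 16))) E) E) E) E)) E) E) E) E)) (N (N (N (N (N (N (N (N E (N (N E (N (L (- 16)) E)) E)) (N (N (N (N E (L (16))) E) E) E)) E) E) E) E) E) E)) E) E) E) E)) E)) (N (N (N (N (N (N (N E (N (N (N (N (N (N E (N (N E (N (N E (N (N (L (16)) E) E)) E)) (N (N (N (N E (N (L (- 16)) E)) E) E) E))) (N (N (N (N E (N E (N (N (L (- 16)) E) E))) E) (N (N (N (N (N E (L (16))) E) E) E) E)) E)) (N (N (N (N (N E (N (N E (N (L (16)) E)) E)) (N (N (N (N E (L (- 16))) E) E) E)) E) E) E)) E) E) E)) E) E) (N (N (N (N (N (N E (N (N (N (N (N E (N (N E (N (N (L (16)) E) E)) E)) (N (N (N (N E (N (L (- 16)) E)) E) E) E)) E) E) E)) (N (N (N (N (N (N (N E (N E (N (N (L (- 16)) E) E))) E) (N (N (N (N (N E (L (16))) E) E) E) E)) E) E) E) E)) (N (N (N (N (N (N (N (N E (N (N E (N (L (16)) E)) E)) (N (N (N (N E (L (- 16))) E) E) E)) E) E) E) E) E) E)) E) E) E)) E) E) E)) E) (N (N (N (N (N (N (N (N E (N (N (N (N (N (N (N E (N E (N E (N (N (N (N (L (32)) E) E) E) E)))) (N (N E (N (N E (N (N (N (L (- 32)) E) E) E)) E)) E)) (N (N (N (N E (N E (N (N (N (L (32)) E) E) E))) E) E) E)) E) E) E) E)) E) E) (N (N (N (N (N (N (N E (N (N (N (N E (N E (N (N (N (N (L (32)) E) E) E) E))) E) E) E)) (N (N (N (N (N E (N (N E (N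 (N (N (L (- 32)) E) E) E)) E)) E) E) E) E)) (N (N (N (N (N (N (N E (N E (N (N (N (L (32)) E) E) E))) E) E) E) E) E) E)) E) E) E) E)) E) E) E) E)) (N (N (N (N (N (N (N (N (N (N E (N (N (N (N (N (N E (N E (N E (N (N (N (N (L (- 32)) E) E) E) E)))) (N (N E (N (N E (N (N (N (L (32)) E) E) E)) E)) E)) (N (N (N (N E (N E (N (N (N (L (- 32)) E) E) E))) E) E) E)) E) E) E)) E) E) (N (N (N (N (N (N E (N (N (N (N E (N E (N (N (N (N (L (- 32)) E) E) E) E))) E) E) E)) (N (N (N (N (N E (N (N E (N (N (N (L (32)) E) E) E)) E)) E) E) E) E)) (N (N (N (N (N (N (N E (N E (N (N (N (L (- 32)) E) E) E))) E) E) E) E) E) E)) E) E) E)) E) E) E) E) E) E)))"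

definition "tY0 = (N E (N (N (N (N (N (N (N (N (N (N E (N E (N (N (N (N (N E (N E (N E (N (N (N (N (N (L (- 32)) E) E) E) E) E)))) (N (N E (N (N E (N (N (N (N (L (32)) E) E) E) E)) E)) (N (N (N (N E (N (N (N (L (- 32)) E) E) E)) E) E) E))) E) E) E))) E) (N (N E (N (N (N (N E (N (N E (N (N E (N (N (N (N (N (L (- 16)) E) E) E) E) E)) E)) (N (N (N (N E (N (N (N (N (L (16)) E) E) E) E)) E) E) E))) (N (N (N (N E (N E (N (N (N (N (N (L (16)) E) E) E) E) E))) E) (N (N (N (N (N E (N (N (N (L (- 16)) E) E) E)) E) E) E) E)) E)) (N (N (N (N (N E (N (N E (N (N (N (N (L (- 16)) E) E) E) E)) E)) (N (N (N (N E (N (N (N (L (16)) E) E) E)) E) E) E)) E) E) E)) E)) E)) (N (N (N (N E (N (N (N E (N (N E (N (N E (N (N (N (N (N (L (16)) E) E) E) E) E)) E)) (N (N (N (N E (N (N (N (N (L (- 16)) E) E) E) E)) E) E) E))) (N (N (N (N E (N E (N (N (N (N (N (L (- 16)) E) E) E) E) E))) E) (N (N (N (N (N E (N (N (N (L (16)) E) E) E)) E) E) E) E)) E)) (N (N (N (N (N E (N (N E (N (N (N (N (L (16)) E) E) E) E)) E)) (N (N (N (N E (N (N (N (L (- 16)) E) E) E)) E) E) E)) E) E) E))) E) E) (N (N (N (N (N E (N E (N (N (N (N E (N (N (N (N (N (L (- 32)) E) E) E) E) E)) E) E) E))) (N (N E (N (N (N (N (N E (N (N (N (N (L (32)) E)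 E) E) E)) E) E) E) E)) (N (N (N (N (N (N (N E (N (N (N (L (- 32)) E) E) E)) E) E) E) E) E) E))) E) E) E))) E) (N (N (N (N (N E (N (N (N (N (N (N (N E (N (N E (N (N E (N (N (L (- 16)) E) E)) E)) (N (N (N (N E (N (L (16)) E)) E) E) E))) (N (N (N (N E (N E (N (N (L (16)) E) E))) E) (N (N (N (N (N E (L (- 16))) E) E) E) E)) E)) (N (N (N (N (N E (N (N E (N (L (- 16)) E)) E)) (N (N (N (N E (L (16))) E) E) E)) E) E) E)) E) E) E) E)) E) E) (N (N (N (N (N (N (N E (N (N (N (N (N E (N (N E (N (N (L (- 16)) E) E)) E)) (N (N (N (N E (N (L (16)) E)) E) E) E)) E) E) E)) (N (N (N (N (N (N (N E (N E (N (N (L (16)) E) E))) E) (N (N (N (N (N E (L (- 16))) E) E) E) E)) E) E) E) E)) (N (N (N (N (N (N (N (N E (N (N E (N (L (- 16)) E)) E)) (N (N (N (N E (L (16))) E) E) E)) E) E) E) E) E) E)) E) E) E) E)) E)) (N (N (N (N (N (N (N E (N (N (N (N (N (N E (N (N E (N (N E (N (N (L (16)) E) E)) E)) (N (N (N (N E (N (L (- 16)) E)) E) E) E))) (N (N (N (N E (N E (N (N (L (- 16)) E) E))) E) (N (N (N (N (N E (L (16))) E) E) E) E)) E)) (N (N (N (N (N E (N (N E (N (L (16)) E)) E)) (N (N (N (N E (L (- 16))) E) E) E)) E) E) E)) E) E) E)) E) E) (N (N (N (N (N (N E (N (N (N (N (N E (N (N E (N (N (L (16)) E) E)) E)) (N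 (N (N (N E (N (L (- 16)) E)) E) E) E)) E) E) E)) (N (N (N (N (N (N (N E (N E (N (N (L (- 16)) E) E))) E) (N (N (N (N (N E (L (16))) E) E) E) E)) E) E) E) E)) (N (N (N (N (N (N (N (N E (N (N E (N (L (16)) E)) E)) (N (N (N (N E (L (- 16))) E) E) E)) E) E) E) E) E) E)) E) E) E)) E) E) E)) E) (N (N (N (N (N (N (N (N E (N (N (N (N (N (N (N E (N E (N E (N (N (N (N (L (32)) E) E) E) E)))) (N (N E (N (N E (N (N (N (L (- 32)) E) E) E)) E)) E)) (N (N (N (N E (N E (N (N (N (L (32)) E) E) E))) E) E) E)) E) E) E) E)) E) E) (N (N (N (N (N (N (N E (N (N (N (N E (N E (N (N (N (N (L (32)) E) E) E) E))) E) E) E)) (N (N (N (N (N E (N (N E (N (N (N (L (- 32)) E) E) E)) E)) E) E) E) E)) (N (N (N (N (N (N (N E (N E (N (N (N (L (32)) E) E) E))) E) E) E) E) E) E)) E) E) E) E)) E) E) E) E)) (N (N (N (N (N (N (N (N (N (N E (N (N (N (N (N (N E (N E (N E (N (N (N (N (L (- 32)) E) E) E) E)))) (N (N E (N (N E (N (N (N (L (32)) E) E) E)) E)) E)) (N (N (N (N E (N E (N (N (N (L (- 32)) E) E) E))) E) E) E)) E) E) E)) E) E) (N (N (N (N (N (N E (N (N (N (N E (N E (N (N (N (N (L (- 32)) E) E) E) E))) E) E) E)) (N (N (N (N (N E (N (N E (N (N (N (L (32)) E) E) E)) E)) E) E) E) E)) (N (N (N (N (N (N (N E (N E (N (N (N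 (L (- 32)) E) E) E))) E) E) E) E) E) E)) E) E) E)) E) E) E) E) E) E)))"

definition "tY1 = (N (N (N (N E (N (N (N (N (N (N (N E (N E (N (N (N (N (N E (N E (N (N (N (N E (N (N (L (- 32)) E) E)) E) E) E))) (N (N E (N (N (N (N (N E (N (L (32)) E)) E) E) E) E)) (N (N (N (N (N (N (N E (L (- 32))) E) E) E) E) E) E))) E) E) E))) E) (N (N E (N (N (N (N E (N (N E (N (N (N (N (N E (N (N (L (- 16)) E) E)) E) E) E) E)) (N (N (N (N (N (N (N E (N (L (16)) E)) E) E) E) E) E) E))) (N (N (N (N E (N (N (N (N E (N (N (L (16)) E) E)) E) E) E)) E) (N (N (N (N (N (N (N (N E (L (- 16))) E) E) E) E) E) E) E)) E)) (N (N (N (N (N E (N (N (N (N (N E (N (L (- 16)) E)) E) E) E) E)) (N (N (N (N (N (N (N E (L (16))) E) E) E) E) E) E)) E) E) E)) E)) E)) (N (N (N (N E (N (N (N E (N (N E (N (N (N (N (N E (N (N (L (16)) E) E)) E) E) E) E)) (N (N (N (N (N (N (N E (N (L (- 16)) E)) E) E) E) E) E) E))) (N (N (N (N E (N (N (N (N E (N (N (L (- 16)) E) E)) E) E) E)) E) (N (N (N (N (N (N (N (N E (L (16))) E) E) E) E) E) E) E)) E)) (N (N (N (N (N E (N (N (N (N (N E (N (L (16)) E)) E) E) E) E)) (N (N (N (N (N (N (N E (L (- 16))) E) E) E) E) E) E)) E) E) E))) E) E) (N (N (N (N (N E (N E (N (N (N (N (N (N (N E (N (N (L (- 32)) E) E))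 E) E) E) E) E) E))) (N (N E (N (N (N (N (N (N (N (N E (N (L (32)) E)) E) E) E) E) E) E) E)) (N (N (N (N (N (N (N (N (N (N E (L (- 32))) E) E) E) E) E) E) E) E) E))) E) E) E))) E) (N (N (N (N (N E (N (N (N (N (N (N (N E (N (N (N (N E (N E (N (L (32)) E))) E) E) E)) (N (N (N (N (N E (N (N E (L (- 32))) E)) E) E) E) E)) (N (N (N (N (N (N (N E (N E (L (32)))) E) E) E) E) E) E)) E) E) E) E)) E) E) (N (N (N (N (N (N (N E (N (N (N (N (N (N (N E (N E (N (L (32)) E))) E) E) E) E) E) E)) (N (N (N (N (N (N (N (N E (N (N E (L (- 32))) E)) E) E) E) E) E) E) E)) (N (N (N (N (N (N (N (N (N (N E (N E (L (32)))) E) E) E) E) E) E) E) E) E)) E) E) E) E)) E)) (N (N (N (N (N (N (N E (N (N (N (N (N (N E (N (N (N (N E (N E (N (L (- 32)) E))) E) E) E)) (N (N (N (N (N E (N (N E (L (32))) E)) E) E) E) E)) (N (N (N (N (N (N (N E (N E (L (- 32)))) E) E) E) E) E) E)) E) E) E)) E) E) (N (N (N (N (N (N E (N (N (N (N (N (N (N E (N E (N (L (- 32)) E))) E) E) E) E) E) E)) (N (N (N (N (N (N (N (N E (N (N E (L (32))) E)) E) E) E) E) E) E) E)) (N (N (N (N (N (N (N (N (N (N E (N E (L (- 32)))) E) E) E) E) E) E) E) E) E)) E) E) E)) E) E) E))) (N E (N (N (N (N (N (N (N E (N (N (N (N (N (N (N E (N (N E (N (N E (N (N (L (16)) E) E))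 E)) (N (N (N (N E (N (L (- 16)) E)) E) E) E))) (N (N (N (N E (N E (N (N (L (- 16)) E) E))) E) (N (N (N (N (N E (L (16))) E) E) E) E)) E)) (N (N (N (N (N E (N (N E (N (L (16)) E)) E)) (N (N (N (N E (L (- 16))) E) E) E)) E) E) E)) E) E) E) E)) E) E) (N (N (N (N (N (N (N E (N (N (N (N (N E (N (N E (N (N (L (16)) E) E)) E)) (N (N (N (N E (N (L (- 16)) E)) E) E) E)) E) E) E)) (N (N (N (N (N (N (N E (N E (N (N (L (- 16)) E) E))) E) (N (N (N (N (N E (L (16))) E) E) E) E)) E) E) E) E)) (N (N (N (N (N (N (N (N E (N (N E (N (L (16)) E)) E)) (N (N (N (N E (L (- 16))) E) E) E)) E) E) E) E) E) E)) E) E) E) E)) E) E) E))) (N (N E (N (N (N (N (N (N (N (N E (N (N (N (N (N (N E (N (N E (N (N E (N (N (L (- 16)) E) E)) E)) (N (N (N (N E (N (L (16)) E)) E) E) E))) (N (N (N (N E (N E (N (N (L (16)) E) E))) E) (N (N (N (N (N E (L (- 16))) E) E) E) E)) E)) (N (N (N (N (N E (N (N E (N (L (- 16)) E)) E)) (N (N (N (N E (L (16))) E) E) E)) E) E) E)) E) E) E)) E) E) (N (N (N (N (N (N E (N (N (N (N (N E (N (N E (N (N (L (- 16)) E) E)) E)) (N (N (N (N E (N (L (16)) E)) E) E) E)) E) E) E)) (N (N (N (N (N (N (N E (N E (N (N (L (16)) E) E))) E) (N (N (N (N (N E (L (- 16))) E) E) E) E)) E) E) E) E)) (N (N (N (N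 (N (N (N (N E (N (N E (N (L (- 16)) E)) E)) (N (N (N (N E (L (16))) E) E) E)) E) E) E) E) E) E)) E) E) E)) E) E) E) E)) E)) E)"

definition "tY2 = (N (N (N (N (N (N E (N E (N (N (N (N E (N (N (N (N E (N (N E (N (N (N (N (N E (N (N (L (16)) E) E)) E) E) E) E)) (N (N (N (N (N (N (N E (N (L (- 16)) E)) E) E) E) E) E) E))) (N (N (N (N E (N (N (N (N E (N (N (L (- 16)) E) E)) E) E) E)) E) (N (N (N (N (N (N (N (N E (L (16))) E) E) E) E) E) E) E)) E)) (N (N (N (N (N E (N (N (N (N (N E (N (L (16)) E)) E) E) E) E)) (N (N (N (N (N (N (N E (L (- 16))) E) E) E) E) E) E)) E) E) E)) E)) E) E) (N (N (N (N (N (N E (N E (N (N (N (N (N (N (N E (N (N (L (- 32)) E) E)) E) E) E) E) E) E))) (N (N E (N (N (N (N (N (N (N (N E (N (L (32)) E)) E) E) E) E) E) E) E)) (N (N (N (N (N (N (N (N (N (N E (L (- 32))) E) E) E) E) E) E) E) E) E))) E) E) E) E)))) (N (N E (N (N (N (N (N E (N (N (N E (N (N E (N (N (N (N (N E (N (N (L (- 16)) E) E)) E) E) E) E)) (N (N (N (N (N (N (N E (N (L (16)) E)) E) E) E) E) E) E))) (N (N (N (N E (N (N (N (N E (N (N (L (16)) E) E)) E) E) E)) E) (N (N (N (N (N (N (N (N E (L (- 16))) E) E) E) E) E) E) E)) E)) (N (N (N (N (N E (N (N (N (N (N E (N (L (- 16)) E)) E) E) E) E)) (N (N (N (N (N (N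 (N E (L (16))) E) E) E) E) E) E)) E) E) E))) E) E) (N (N (N (N (N E (N E (N (N (N (N (N (N (N E (N (N (L (32)) E) E)) E) E) E) E) E) E))) (N (N E (N (N (N (N (N (N (N (N E (N (L (- 32)) E)) E) E) E) E) E) E) E)) (N (N (N (N (N (N (N (N (N (N E (L (32))) E) E) E) E) E) E) E) E) E))) E) E) E)) E)) (N E (N (N (N (N (N (N (N (N E (N (N (N (N (N (N (N E (N E (N (L (- 32)) E))) E) E) E) E) E) E)) (N (N (N (N (N (N (N (N E (N (N E (L (32))) E)) E) E) E) E) E) E) E)) (N (N (N (N (N (N (N (N (N (N E (N E (L (- 32)))) E) E) E) E) E) E) E) E) E)) E) E) E) E) E)))) E) (N (N (N (N E (N (N (N (N E (N (N (N (N E (N (N E (N (N E (N (N (N (N (N (L (16)) E) E) E) E) E)) E)) (N (N (N (N E (N (N (N (N (L (- 16)) E) E) E) E)) E) E) E))) (N (N (N (N E (N E (N (N (N (N (N (L (- 16)) E) E) E) E) E))) E) (N (N (N (N (N E (N (N (N (L (16)) E) E) E)) E) E) E) E)) E)) (N (N (N (N (N E (N (N E (N (N (N (N (L (16)) E) E) E) E)) E)) (N (N (N (N E (N (N (N (L (- 16)) E) E) E)) E) E) E)) E) E) E)) E)) E) E) (N (N (N (N (N (N E (N E (N (N (N (N E (N (N (N (N (N (L (- 32)) E) E) E) E) E)) E) E) E))) (N (N E (N (N (N (N (N E (N (N (N (N (L (32)) E) E) E) E)) E) E) E) E)) (N (N (N (N (N (N (N E (N (N (N (L (- 32)) E) E)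 E)) E) E) E) E) E) E))) E) E) E) E))) E) (N (N E (N (N (N (N (N (N (N (N E (N (N (N (N (N E (N (N E (N (N (L (- 16)) E) E)) E)) (N (N (N (N E (N (L (16)) E)) E) E) E)) E) E) E)) (N (N (N (N (N (N (N E (N E (N (N (L (16)) E) E))) E) (N (N (N (N (N E (L (- 16))) E) E) E) E)) E) E) E) E)) (N (N (N (N (N (N (N (N E (N (N E (N (L (- 16)) E)) E)) (N (N (N (N E (L (16))) E) E) E)) E) E) E) E) E) E)) E) E) E) E) E)) E)) E)) (N (N (N (N (N E (N (N (N (N (N E (N (N (N E (N (N E (N (N E (N (N (N (N (N (L (- 16)) E) E) E) E) E)) E)) (N (N (N (N E (N (N (N (N (L (16)) E) E) E) E)) E) E) E))) (N (N (N (N E (N E (N (N (N (N (N (L (16)) E) E) E) E) E))) E) (N (N (N (N (N E (N (N (N (L (- 16)) E) E) E)) E) E) E) E)) E)) (N (N (N (N (N E (N (N E (N (N (N (N (L (- 16)) E) E) E) E)) E)) (N (N (N (N E (N (N (N (L (16)) E) E) E)) E) E) E)) E) E) E))) E) E) (N (N (N (N (N E (N E (N (N (N (N E (N (N (N (N (N (L (32)) E) E) E) E) E)) E) E) E))) (N (N E (N (N (N (N (N E (N (N (N (N (L (- 32)) E) E) E) E)) E) E) E) E)) (N (N (N (N (N (N (N E (N (N (N (L (32)) E) E) E)) E) E) E) E) E) E))) E) E) E)) E)) (N E (N (N (N (N (N (N (N (N E (N (N (N (N (N E (N (N E (N (N (L (16)) E) E)) E)) (N (N (N (N E (N (L (-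 16)) E)) E) E) E)) E) E) E)) (N (N (N (N (N (N (N E (N E (N (N (L (- 16)) E) E))) E) (N (N (N (N (N E (L (16))) E) E) E) E)) E) E) E) E)) (N (N (N (N (N (N (N (N E (N (N E (N (L (16)) E)) E)) (N (N (N (N E (L (- 16))) E) E) E)) E) E) E) E) E) E)) E) E) E) E) E))) E) E) (N (N (N (N E (N (N (N (N (N (N (N (N E (N (N (N (N E (N E (N (N (N (N (L (- 32)) E) E) E) E))) E) E) E)) (N (N (N (N (N E (N (N E (N (N (N (L (32)) E) E) E)) E)) E) E) E) E)) (N (N (N (N (N (N (N E (N E (N (N (N (L (- 32)) E) E) E))) E) E) E) E) E) E)) E) E) E) E) E)) E) E) E))) E)"

definition "tY3 = (N (N (N (N (N (N E (N (N (N (N E (N E (N (N (N (N (N (N E (N E (N (N (N (N E (N (N (L (- 32)) E) E)) E) E) E))) (N (N E (N (N (N (N (N E (N (L (32)) E)) E) E) E) E)) (N (N (N (N (N (N (N E (L (- 32))) E) E) E) E) E) E))) E) E) E) E))) E) (N (N E (N (N (N (N (N E (N (N E (N (N (N (N (N E (N (N (L (- 16)) E) E)) E) E) E) E)) (N (N (N (N (N (N (N E (N (L (16)) E)) E) E) E) E) E) E))) (N (N (N (N E (N (N (N (N E (N (N (L (16)) E) E)) E) E) E)) E) (N (N (N (N (N (N (N (N E (L (- 16))) E) E) E) E) E) E) E)) E)) (N (N (N (N (N E (N (N (N (N (N E (N (L (- 16)) E)) E) E) E) E)) (N (N (N (N (N (N (N E (L (16))) E) E) E) E) E) E)) E) E)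 E)) E) E)) E)) E)) (N (N (N (N (N E (N (N E (N (N (N (N (N E (N E (N (N (N (N E (N (N (L (32)) E) E)) E) E) E))) (N (N E (N (N (N (N (N E (N (L (- 32)) E)) E) E) E) E)) (N (N (N (N (N (N (N E (L (32))) E) E) E) E) E) E))) E) E) E)) E)) (N E (N (N (N (N (N E (N (N E (N (N (N (N (N E (N (N (L (16)) E) E)) E) E) E) E)) (N (N (N (N (N (N (N E (N (L (- 16)) E)) E) E) E) E) E) E))) (N (N (N (N E (N (N (N (N E (N (N (L (- 16)) E) E)) E) E) E)) E) (N (N (N (N (N (N (N (N E (L (16))) E) E) E) E) E) E) E)) E)) (N (N (N (N (N E (N (N (N (N (N E (N (L (16)) E)) E) E) E) E)) (N (N (N (N (N (N (N E (L (- 16))) E) E) E) E) E) E)) E) E) E)) E) E))) E) E) (N (N (N (N E (N (N (N (N (N (N (N (N E (N (N (N (N E (N E (N (L (- 32)) E))) E) E) E)) (N (N (N (N (N E (N (N E (L (32))) E)) E) E) E) E)) (N (N (N (N (N (N (N E (N E (L (- 32)))) E) E) E) E) E) E)) E) E) E) E) E)) E) E) E))) E) (N (N (N (N (N (N (N E (N E (N (N (N (N (N (N E (N E (N E (N (N (N (N (N (L (- 32)) E) E) E) E) E)))) (N (N E (N (N E (N (N (N (N (L (32)) E) E) E) E)) E)) (N (N (N (N E (N (N (N (L (- 32)) E) E) E)) E) E) E))) E) E) E) E))) E) (N (N E (N (N (N (N (N E (N (N E (N (N E (N (N (N (N (N (L (- 16)) E) E) E) E) E)) E)) (N (N (N (N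 E (N (N (N (N (L (16)) E) E) E) E)) E) E) E))) (N (N (N (N E (N E (N (N (N (N (N (L (16)) E) E) E) E) E))) E) (N (N (N (N (N E (N (N (N (L (- 16)) E) E) E)) E) E) E) E)) E)) (N (N (N (N (N E (N (N E (N (N (N (N (L (- 16)) E) E) E) E)) E)) (N (N (N (N E (N (N (N (L (16)) E) E) E)) E) E) E)) E) E) E)) E) E)) E)) E) E) (N (N (N (N (N E (N (N (N (N (N (N (N (N E (N (N E (N (N E (N (N (L (- 16)) E) E)) E)) (N (N (N (N E (N (L (16)) E)) E) E) E))) (N (N (N (N E (N E (N (N (L (16)) E) E))) E) (N (N (N (N (N E (L (- 16))) E) E) E) E)) E)) (N (N (N (N (N E (N (N E (N (L (- 16)) E)) E)) (N (N (N (N E (L (16))) E) E) E)) E) E) E)) E) E) E) E) E)) E) E) E) E)) E)) (N (N (N (N (N (N (N (N E (N (N E (N (N (N (N (N E (N E (N E (N (N (N (N (N (L (32)) E) E) E) E) E)))) (N (N E (N (N E (N (N (N (N (L (- 32)) E) E) E) E)) E)) (N (N (N (N E (N (N (N (L (32)) E) E) E)) E) E) E))) E) E) E)) E)) (N E (N (N (N (N (N E (N (N E (N (N E (N (N (N (N (N (L (16)) E) E) E) E) E)) E)) (N (N (N (N E (N (N (N (N (L (- 16)) E) E) E) E)) E) E) E))) (N (N (N (N E (N E (N (N (N (N (N (L (- 16)) E) E) E) E) E))) E) (N (N (N (N (N E (N (N (N (L (16)) E) E) E)) E) E) E) E)) E)) (N (N (N (N (N E (N (N E (N (N (N (N (L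 (16)) E) E) E) E)) E)) (N (N (N (N E (N (N (N (L (- 16)) E) E) E)) E) E) E)) E) E) E)) E) E))) E) E) (N (N (N (N E (N (N (N (N (N (N (N (N E (N (N E (N (N E (N (N (L (16)) E) E)) E)) (N (N (N (N E (N (L (- 16)) E)) E) E) E))) (N (N (N (N E (N E (N (N (L (- 16)) E) E))) E) (N (N (N (N (N E (L (16))) E) E) E) E)) E)) (N (N (N (N (N E (N (N E (N (L (16)) E)) E)) (N (N (N (N E (L (- 16))) E) E) E)) E) E) E)) E) E) E) E) E)) E) E) E)) E) E) (N (N (N (N (N (N (N E (N (N (N (N (N (N (N (N E (N E (N E (N (N (N (N (L (- 32)) E) E) E) E)))) (N (N E (N (N E (N (N (N (L (32)) E) E) E)) E)) E)) (N (N (N (N E (N E (N (N (N (L (- 32)) E) E) E))) E) E) E)) E) E) E) E) E)) E) E) E) E) E) E))) E)"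

lemma lt4: "(n::nat) < 4 \<longleftrightarrow> n = 0 \<or> n = Suc 0 \<or> n = 2 \<or> n = 3" by presburger

lemma b4z: "b<4 \<Longrightarrow> c<4 \<Longrightarrow> e<4 \<Longrightarrow> f<4 \<Longrightarrow> (b,c,e,f) \<notin> set L16 \<Longrightarrow> beta4 b c e f = 0"
  apply (simp only: lt4)
  apply (elim disjE)
  apply (simp_all add: b4tab L16_def)
  done

lemma b2z: "a<4 \<Longrightarrow> d<4 \<Longrightarrow> (a,d) \<notin> set P4 \<Longrightarrow> beta2 a d = 0"
  apply (simp only: lt4)
  apply (elim disjE)
  apply (simp_all add: beta2_def P4_def)
  done

definition L64 :: "(nat \<times> nat \<times> nat \<times> nat \<times> nat \<times> nat) list" where
  "L64 = concat (map (\<lambda>(a,d). map (\<lambda>(b,c,e,f). (a,b,c,d,e,f)) L16) P4)"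

lemma mem_L64: "(a,d) \<in> set P4 \<Longrightarrow> (b,c,e,f) \<in> set L16 \<Longrightarrow> (a,b,c,d,e,f) \<in> set L64"
  by (force simp: L64_def)

lemma gsum_list:
  assumes "distinct xs" "set xs \<subseteq> I" "finite I" "\<And>t. t \<in> I \<Longrightarrow> t \<notin> set xs \<Longrightarrow> f t = gz"
  shows "gsum f I = foldr (\<lambda>t acc. gadd (f t) acc) xs gz"
proof -
  have "gsum f I = gsum f (set xs)"
    unfolding gsum_def fun_eq_iff
  proof
    fix S
    show "(\<Sum>i\<in>I. f i S) = (\<Sum>i\<in>set xs. f i S)"
      by (rule sum.mono_neutral_right[OF assms(3) assms(2)]) (auto simp: assms(4) gz_def)
  qed
  also have "\<dots> = foldr (\<lambda>t acc. gadd (f t) acc) xs gz"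
    using assms(1)
  proof (induction xs)
    case Nil then show ?case by (simp add: gsum_def gz_def)
  next
    case (Cons x xs)
    have "gsum f (set (x # xs)) = gadd (f x) (gsum f (set xs))"
      using Cons.prems by (simp add: gsum_def gadd_def)
    then show ?case using Cons by simp
  qed
  finally show ?thesis .
qed

lemma gsmul_zero: "gsmul 0 x = gz" by (simp add: gsmul_def gz_def)
lemma sem_smul_m1: "gsmul (-1) (sem i u) = sem i (scaleT (-1) u)"
  using sem_smul[of "-1" i u] by simp
lemma sem_smul_num: "gsmul (numeral n) (sem i u) = sem i (scaleT (numeral n) u)"
  using sem_smul[of "numeral n" i u] by simp

lemma X2_fold: "X2 = gsmul 4 (foldr (\<lambda>t acc. gadd ((\<lambda>(a, b, c, d, e, f).
          gsmul (beta4 b c e f * beta2 a d)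
            (gadd (gmul (gmul (Jc a d) (Jc b e)) (Jc c f))
                  (gsmul 2 (gmul (gmul (Jc a e) (Jc b f)) (Jc c d))))) t) acc) L64 gz)"
  unfolding X2_def
proof (subst gsum_list)
  show "distinct L64" by (simp add: L64_def L16_def P4_def)
  show "set L64 \<subseteq> {..<4} \<times> {..<4} \<times> {..<4} \<times> {..<4} \<times> {..<4} \<times> {..<4}"
    by (auto simp: L64_def L16_def P4_def)
  show "finite ({..<4::nat} \<times> {..<4::nat} \<times> {..<4::nat} \<times> {..<4::nat} \<times> {..<4::nat} \<times> {..<4::nat})"
    by simp
next
  fix t :: "nat \<times> nat \<times> nat \<times> nat \<times> nat \<times> nat"
  assume t: "t \<in> {..<4} \<times> {..<4} \<times> {..<4} \<times> {..<4} \<times> {..<4} \<times> {..<4}" "t \<notin> set L64"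
  obtain a b c d e f where te: "t = (a,b,c,d,e,f)" by (cases t) auto
  have bd: "a<4" "b<4" "c<4" "d<4" "e<4" "f<4" using t(1) te by auto
  have "beta4 b c e f * beta2 a d = 0"
  proof (cases "(a,d) \<in> set P4")
    case True
    then have "(b,c,e,f) \<notin> set L16" using t(2) te mem_L64 by blast
    then show ?thesis using b4z bd by simp
  next
    case False
    then show ?thesis using b2z bd by simp
  qed
  then show "(case t of (a, b, c, d, e, f) \<Rightarrow>
          gsmul (beta4 b c e f * beta2 a d)
            (gadd (gmul (gmul (Jc a d) (Jc b e)) (Jc c f))
                  (gsmul 2 (gmul (gmul (Jc a e) (Jc b f)) (Jc c d))))) = gz"
    by (simp add: te gsmul_zero del: mult_eq_0_iff)
qed simp

lemma X2_tr: "X2 = sem 0 tX"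
  unfolding X2_fold
  apply (simp add: L64_def L16_def P4_def b4tab beta2_def Jtr tJ00_def tJ01_def tJ02_def tJ03_def tJ10_def tJ11_def tJ12_def tJ13_def tJ20_def tJ21_def tJ22_def tJ23_def tJ30_def tJ31_def tJ32_def tJ33_def sem_mul sem_add sem_smul_m1 sem_smul_num gadd_gz_right del: sem.simps)
  apply (rule sem_eqI)
  apply (simp add: tX_def)
  done

lemma Xsplit: "sem 0 tX = gadd (gadd (gadd (sem 0 tY0) (sem 0 tY1)) (sem 0 tY2)) (sem 0 tY3)"
  apply (simp only: sem_add)
  apply (rule sem_eqI)
  apply (simp add: tX_def tY0_def tY1_def tY2_def tY3_def)
  done

lemma Ysq0: "gmul (sem 0 tY0) (sem 0 tY0) = gz"
  apply (simp only: sem_mul)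
  apply (subst sem.simps(1)[symmetric, of 0])
  apply (rule sem_eqI)
  apply (simp add: tY0_def)
  done

lemma Yev0: "evn (sem 0 tY0)"
  by (rule okT_evn) (simp add: tY0_def)

lemma Ysq1: "gmul (sem 0 tY1) (sem 0 tY1) = gz"
  apply (simp only: sem_mul)
  apply (subst sem.simps(1)[symmetric, of 0])
  apply (rule sem_eqI)
  apply (simp add: tY1_def)
  done

lemma Yev1: "evn (sem 0 tY1)"
  by (rule okT_evn) (simp add: tY1_def)

lemma Ysq2: "gmul (sem 0 tY2) (sem 0 tY2) = gz"
  apply (simp only: sem_mul)
  apply (subst sem.simps(1)[symmetric, of 0])
  apply (rule sem_eqI)
  apply (simp add: tY2_def)
  done

lemma Yev2: "evn (sem 0 tY2)"
  by (rule okT_evn) (simp add: tY2_def)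

lemma Ysq3: "gmul (sem 0 tY3) (sem 0 tY3) = gz"
  apply (simp only: sem_mul)
  apply (subst sem.simps(1)[symmetric, of 0])
  apply (rule sem_eqI)
  apply (simp add: tY3_def)
  done

lemma Yev3: "evn (sem 0 tY3)"
  by (rule okT_evn) (simp add: tY3_def)

lemma Yprod: "gmul (gmul (sem 0 tY0) (sem 0 tY1)) (gmul (sem 0 tY2) (sem 0 tY3)) = sem 0 (monoT 679477248 (replicate 24 True))"
  apply (simp only: sem_mul)
  apply (rule sem_eqI)
  apply (simp add: tY0_def tY1_def tY2_def tY3_def numeral_eq_Suc)
  done

theorem lemma1:
  shows "\<exists>c. c \<noteq> 0 \<and> gpow X2 4 = gsmul c gtop"
proof -
  have "gpow X2 4 = gsmul 24 (gmul (gmul (sem 0 tY0) (sem 0 tY1)) (gmul (sem 0 tY2) (sem 0 tY3)))"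
    by (rule main_assembly[OF _ Yev0 Yev1 Yev2 Yev3 Ysq0 Ysq1 Ysq2 Ysq3]) (simp add: X2_tr Xsplit)
  also have "\<dots> = gsmul 24 (sem 0 (monoT 679477248 (replicate 24 True)))"
    by (simp only: Yprod)
  also have "\<dots> = gsmul (24 * 679477248) gtop"
    by (simp only: sem_monoT posn_replicate gtop_ind gsmul_gsmul) (simp add: atLeast0LessThan)
  finally show ?thesis by (intro exI[of _ "24 * 679477248"]) simp
qed

end
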